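(* Let $T\ge 1$ and $t\ge 1$ be integers and let $g_{T,t}:\mathbb{R}^{Tt}\to\mathbb{R}$ be the function defined in the context. Then: (1) the function $\mathbf{x}\mapsto g_{T,t}(\mathbf{y}-\mathbf{x})$ is a zero-chain; (2) $\mathbf{0}$ is a minimizer of $g_{T,t}$, $\inf_{\mathbf{x}} g_{T,t}(\mathbf{x}) = 0$, and $g_{T,t}(\mathbf{x})\le \frac12\mathbf{x}^\top(\mathbf{B}+\mathbf{I})\mathbf{x}$ for all $\mathbf{x}\in\mathbb{R}^{Tt}$; (3) $g_{T,t}$ is $37$-smooth; (4) there is a universal constant $C_3>0$ (independent of $T$ and $t$) such that $g_{T,t}$ satisfies the $\frac{1}{C_3T}$-PL condition.
   Context: A differentiable $f:\mathbb{R}^d\to\mathbb{R}$ is $L$-smooth if $\|\nabla f(\mathbf{x})-\nabla f(\mathbf{z})\|\le L\|\mathbf{x}-\mathbf{z}\|$ for all $\mathbf{x},\mathbf{z}$. It satisfies the $\mu$-PL condition ($\mu>0$) if $\|\nabla f(\mathbf{x})\|^2\ge 2\mu\,(f(\mathbf{x})-\inf_{\mathbf{z}} f(\mathbf{z}))$ for all $\mathbf{x}$. For $\mathbf{x}\in\mathbb{R}^d$, $\mathrm{supp}(\mathbf{x})=\{i:\mathbf{x}_i\neq 0\}$. A differentiable $f:\mathbb{R}^d\to\mathbb{R}$ is a zero-chain if for every $\mathbf{x}$ and every $k\in\{0,1,\dots,d\}$, $\mathrm{supp}(\mathbf{x})\subseteq\{1,\dots,k\}$ implies $\mathrm{supp}(\nabla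 f(\mathbf{x}))\subseteq\{1,\dots,k+1\}$. Construction. For a constant $y>0$ define $v_y:\mathbb{R}\to\mathbb{R}$ by $v_y(x)=\frac12x^2$ if $x\le\frac{31}{32}y$; $v_y(x)=\frac12x^2-16(x-\frac{31}{32}y)^2$ if $\frac{31}{32}y<x\le y$; $v_y(x)=\frac12x^2-\frac{y^2}{32}+16(x-\frac{33}{32}y)^2$ if $y<x\le\frac{33}{32}y$; $v_y(x)=\frac12x^2-\frac{y^2}{32}$ if $x>\frac{33}{32}y$. For $\mathbf{x}\in\mathbb{R}^{Tt}$, with the convention $\mathbf{x}_0=0$, let $$q_{T,t}(\mathbf{x})=\frac12\sum_{i=0}^{t-1}\Big[\big(\tfrac78\mathbf{x}_{iT}-\mathbf{x}_{iT+1}\big)^2+\sum_{j=1}^{T-1}(\mathbf{x}_{iT+j+1}-\mathbf{x}_{iT+j})^2\Big],$$ and let $\mathbf{B}$ be the symmetric positive semidefinite $Tt\times Tt$ matrix with $q_{T,t}(\mathbf{x})=\frac12\mathbf{x}^\top\mathbf{B}\mathbf{x}$. Let $\mathbf{y}\in\mathbb{R}^{Tt}$ be given by $\mathbf{y}_{qT+b}=(7/8)^q$ for $q\in\{0,\dots,t-1\}$, $b\in\{1,\dots,T\}$. Define $g_{T,t}(\mathbf{x})=q_{T,t}(\mathbf{x})+\sum_{i=1}^{Tt}v_{\mathbf{y}_i}(\mathbf{x}_i)$. *)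

theory Defs
  imports "HOL-Analysis.Analysis"
begin

text \<open>R^n is represented by functions nat => real supported on the index set {1..n}.\<close>

definition vecs :: "nat \<Rightarrow> (nat \<Rightarrow> real) set" where
  "vecs n = {x. \<forall>i. i \<notin> {1..n} \<longrightarrow> x i = 0}"

definition vnorm :: "nat \<Rightarrow> (nat \<Rightarrow> real) \<Rightarrow> real" where
  "vnorm n x = sqrt (\<Sum>i=1..n. (x i)^2)"

definition has_grad :: "nat \<Rightarrow> ((nat \<Rightarrow> real) \<Rightarrow> real) \<Rightarrow> (nat \<Rightarrow> real) \<Rightarrow> (nat \<Rightarrow> real) \<Rightarrow> bool" where
  "has_grad n f x G \<longleftrightarrow> G \<in> vecs n \<and>
     (\<forall>\<epsilon>>0. \<exists>\<delta>>0. \<forall>h\<in>vecs n. vnorm n h < \<delta> \<longrightarrow>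
        \<bar>f (\<lambda>i. x i + h i) - f x - (\<Sum>i=1..n. G i * h i)\<bar> \<le> \<epsilon> * vnorm n h)"

definition differentiable_Rn :: "nat \<Rightarrow> ((nat \<Rightarrow> real) \<Rightarrow> real) \<Rightarrow> bool" where
  "differentiable_Rn n f \<longleftrightarrow> (\<forall>x\<in>vecs n. \<exists>G. has_grad n f x G)"

definition grad :: "nat \<Rightarrow> ((nat \<Rightarrow> real) \<Rightarrow> real) \<Rightarrow> (nat \<Rightarrow> real) \<Rightarrow> (nat \<Rightarrow> real)" where
  "grad n f x = (SOME G. has_grad n f x G)"

definition L_smooth :: "nat \<Rightarrow> real \<Rightarrow> ((nat \<Rightarrow> real) \<Rightarrow> real) \<Rightarrow> bool" where
  "L_smooth n L f \<longleftrightarrow> differentiable_Rn n f \<and>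
     (\<forall>x\<in>vecs n. \<forall>z\<in>vecs n. vnorm n (\<lambda>i. grad n f x i - grad n f z i) \<le> L * vnorm n (\<lambda>i. x i - z i))"

definition PL_cond :: "nat \<Rightarrow> real \<Rightarrow> ((nat \<Rightarrow> real) \<Rightarrow> real) \<Rightarrow> bool" where
  "PL_cond n \<mu> f \<longleftrightarrow> \<mu> > 0 \<and> differentiable_Rn n f \<and>
     (\<forall>x\<in>vecs n. (vnorm n (grad n f x))^2 \<ge> 2 * \<mu> * (f x - (INF z\<in>vecs n. f z)))"

definition zero_chain :: "nat \<Rightarrow> ((nat \<Rightarrow> real) \<Rightarrow> real) \<Rightarrow> bool" where
  "zero_chain n f \<longleftrightarrow> differentiable_Rn n f \<and>
     (\<forall>x\<in>vecs n. \<forall>k\<le>n. {i. x i \<noteq> 0} \<subseteq> {1..k} \<longrightarrow> {i. grad n f x i \<noteq> 0} \<subseteq> {1..k+1})"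

definition vfun :: "real \<Rightarrow> real \<Rightarrow> real" where
  "vfun y x =
    (if x \<le> 31/32 * y then x^2/2
     else if x \<le> y then x^2/2 - 16 * (x - 31/32 * y)^2
     else if x \<le> 33/32 * y then x^2/2 - y^2/32 + 16 * (x - 33/32 * y)^2
     else x^2/2 - y^2/32)"

text \<open>q_{T,t}, with the convention x_0 = 0.\<close>
definition qfun :: "nat \<Rightarrow> nat \<Rightarrow> (nat \<Rightarrow> real) \<Rightarrow> real" where
  "qfun T t x = 1/2 * (\<Sum>i<t. ((7/8) * (if i = 0 then 0 else x (i*T)) - x (i*T+1))^2
        + (\<Sum>j=1..T-1. (x (i*T+j+1) - x (i*T+j))^2))"

definition yvec :: "nat \<Rightarrow> nat \<Rightarrow> nat \<Rightarrow> real" where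
  "yvec T t i = (if 1 \<le> i \<and> i \<le> T*t then (7/8::real)^((i-1) div T) else 0)"

definition gfun :: "nat \<Rightarrow> nat \<Rightarrow> (nat \<Rightarrow> real) \<Rightarrow> real" where
  "gfun T t x = qfun T t x + (\<Sum>i=1..T*t. vfun (yvec T t i) (x i))"

definition Bmat :: "nat \<Rightarrow> nat \<Rightarrow> nat \<Rightarrow> nat \<Rightarrow> real" where
  "Bmat T t = (THE B. (\<forall>i j. B i j = B j i)
      \<and> (\<forall>i j. i \<notin> {1..T*t} \<or> j \<notin> {1..T*t} \<longrightarrow> B i j = 0)
      \<and> (\<forall>x\<in>vecs (T*t). 0 \<le> (\<Sum>i=1..T*t. \<Sum>j=1..T*t. x i * B i j * x j))
      \<and> (\<forall>x\<in>vecs (T*t). qfun T t x = 1/2 * (\<Sum>i=1..T*t. \<Sum>j=1..T*t. x i * B i j * x j)))"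

end

theory Submission
  imports Defs
begin
definition mx :: "real \<Rightarrow> real" where "mx s = max s 0"
definition tent :: "real \<Rightarrow> real \<Rightarrow> real" where
  "tent y x = mx (x - 31/32*y) - 2 * mx (x - y) + mx (x - 33/32*y)"
definition vd :: "real \<Rightarrow> real \<Rightarrow> real" where
  "vd y x = x - 32 * tent y x"

lemma vfun_repr:
  assumes "y > 0"
  shows "vfun y x = x^2/2 - 16 * ((mx (x - 31/32*y))^2 - 2*(mx (x - y))^2 + (mx (x - 33/32*y))^2)"
proof -
  consider "x \<le> 31/32*y" | "31/32*y < x \<and> x \<le> y" | "y < x \<and> x \<le> 33/32*y" | "33/32*y < x" by linarith
  then show ?thesis
  proof cases
    case 1 then show ?thesis using assms by (simp add: vfun_def mx_def)
  next
    case 2 then show ?thesis using assms by (simp add: vfun_def mx_def)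
  next
    case 3 then show ?thesis using assms by (simp add: vfun_def mx_def power2_eq_square algebra_simps)
  next
    case 4 then show ?thesis using assms by (simp add: vfun_def mx_def power2_eq_square algebra_simps)
  qed
qed

lemma mx_sq_rem: "0 \<le> (mx (s+b))^2 - (mx s)^2 - 2 * mx s * b \<and> (mx (s+b))^2 - (mx s)^2 - 2 * mx s * b \<le> b^2"
proof -
  consider "s \<ge> 0" "s + b \<ge> 0" | "s \<ge> 0" "s + b < 0" | "s < 0" "s + b \<ge> 0" | "s < 0" "s + b < 0" by linarith
  then show ?thesis
  proof cases
    case 1 then show ?thesis by (simp add: mx_def power2_eq_square algebra_simps)
  next
    case 2
    have "0 \<le> s * (- s - 2*b)" using 2 by (intro mult_nonneg_nonneg) auto
    moreover have "0 \<le> (s+b)^2" by simp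
    ultimately show ?thesis using 2 by (simp add: mx_def power2_eq_square algebra_simps)
  next
    case 3
    have "(s+b)^2 \<le> b^2" using 3 by (intro power_mono) auto
    then show ?thesis using 3 by (simp add: mx_def)
  next
    case 4 then show ?thesis by (simp add: mx_def)
  qed
qed

lemma tent_lip: assumes "y > 0" shows "\<bar>tent y a - tent y b\<bar> \<le> \<bar>a - b\<bar>"
  using assms unfolding tent_def mx_def by (auto simp: max_def abs_if split: if_splits)

lemma tent_nonneg: assumes "y > 0" shows "0 \<le> tent y x"
  using assms unfolding tent_def mx_def by (auto simp: max_def)

lemma tent_out: assumes "y > 0" "\<not> (31/32*y < x \<and> x < 33/32*y)" shows "tent y x = 0"
  using assms unfolding tent_def mx_def by (auto simp: max_def)

lemma vd_out: assumes "y > 0" "\<not> (31/32*y < x \<and> x < 33/32*y)" shows "vd y x = x"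
  using tent_out[OF assms] by (simp add: vd_def)

lemma vd_in: assumes "y > 0" "31/32*y < x" "x < 33/32*y" shows "0 \<le> vd y x"
  using assms unfolding vd_def tent_def mx_def by (auto simp: max_def)

lemma vd_y: assumes "y > 0" shows "vd y y = 0"
  using assms unfolding vd_def tent_def mx_def by (auto simp: max_def)

lemma vd_lip: assumes "y > 0" shows "\<bar>vd y a - vd y b\<bar> \<le> 33 * \<bar>a - b\<bar>"
  using tent_lip[OF assms, of a b] unfolding vd_def by (smt (verit))

lemma x_vd_nonneg: assumes "y > 0" shows "0 \<le> x * vd y x"
proof (cases "31/32*y < x \<and> x < 33/32*y")
  case True then show ?thesis using vd_in[OF assms] assms by (intro mult_nonneg_nonneg) auto
next
  case False then show ?thesis using vd_out[OF assms False] by simp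
qed

lemma v_rem: assumes "y > 0"
  shows "\<bar>vfun y (x + b) - vfun y x - vd y x * b\<bar> \<le> 33 * b^2"
proof -
  have r1: "0 \<le> (mx (x + b - 31/32*y))^2 - (mx (x - 31/32*y))^2 - 2 * mx (x - 31/32*y) * b \<and> (mx (x + b - 31/32*y))^2 - (mx (x - 31/32*y))^2 - 2 * mx (x - 31/32*y) * b \<le> b^2"
    using mx_sq_rem[of "x - 31/32*y" b] by (simp add: algebra_simps)
  have r2: "0 \<le> (mx (x + b - y))^2 - (mx (x - y))^2 - 2 * mx (x - y) * b \<and> (mx (x + b - y))^2 - (mx (x - y))^2 - 2 * mx (x - y) * b \<le> b^2"
    using mx_sq_rem[of "x - y" b] by (simp add: algebra_simps)
  have r3: "0 \<le> (mx (x + b - 33/32*y))^2 - (mx (x - 33/32*y))^2 - 2 * mx (x - 33/32*y) * b \<and> (mx (x + b - 33/32*y))^2 - (mx (x - 33/32*y))^2 - 2 * mx (x - 33/32*y) * b \<le> b^2"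
    using mx_sq_rem[of "x - 33/32*y" b] by (simp add: algebra_simps)
  have eq: "vfun y (x + b) - vfun y x - vd y x * b = b^2/2 - 16 * (
     ((mx (x + b - 31/32*y))^2 - (mx (x - 31/32*y))^2 - 2 * mx (x - 31/32*y) * b)
     - 2 * ((mx (x + b - y))^2 - (mx (x - y))^2 - 2 * mx (x - y) * b)
     + ((mx (x + b - 33/32*y))^2 - (mx (x - 33/32*y))^2 - 2 * mx (x - 33/32*y) * b))"
    unfolding vfun_repr[OF assms] vd_def tent_def by (simp add: power2_eq_square algebra_simps)
  have "0 \<le> b^2" by simp
  then show ?thesis unfolding eq using r1 r2 r3 by (simp add: abs_if)
qed

lemma vfun_nonneg: assumes "y > 0" shows "0 \<le> vfun y x"
proof -
  consider "x \<le> 31/32*y" | "31/32*y < x \<and> x \<le> y" | "y < x \<and> x \<le> 33/32*y" | "33/32*y < x" by linarith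
  then show ?thesis
  proof cases
    case 1 then show ?thesis by (simp add: vfun_def)
  next
    case 2
    have "(x - 31/32*y)^2 \<le> (x/31)^2" using 2 assms by (intro power_mono) auto
    then show ?thesis using 2 by (simp add: vfun_def power_divide) (smt (verit) zero_le_power2)
  next
    case 3
    have "y^2 \<le> x^2" using 3 assms by (intro power_mono) auto
    moreover have "0 \<le> (x - 33/32*y)^2" by simp
    moreover have "vfun y x = x^2/2 - y^2/32 + 16*(x-33/32*y)^2" using 3 by (simp add: vfun_def)
    moreover have "0 \<le> y^2" by simp
    ultimately show ?thesis by linarith
  next
    case 4
    have "y^2 \<le> x^2" using 4 assms by (intro power_mono) auto
    moreover have "0 \<le> y^2" by simp
    moreover have "vfun y x = x^2/2 - y^2/32" using 4 assms by (simp add: vfun_def)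
    ultimately show ?thesis by linarith
  qed
qed

lemma vfun_le: assumes "y > 0" shows "vfun y x \<le> x^2/2"
proof -
  consider "x \<le> 31/32*y" | "31/32*y < x \<and> x \<le> y" | "y < x \<and> x \<le> 33/32*y" | "33/32*y < x" by linarith
  then show ?thesis
  proof cases
    case 1 then show ?thesis by (simp add: vfun_def)
  next
    case 2 then show ?thesis by (simp add: vfun_def)
  next
    case 3
    have "(x - 33/32*y)^2 \<le> (y/32)^2" using 3 assms by (subst abs_le_square_iff[symmetric]) auto
    then show ?thesis using 3 by (simp add: vfun_def power_divide) (smt (verit) zero_le_power2)
  next
    case 4 then show ?thesis by (simp add: vfun_def)
  qed
qed

definition cc :: "nat \<Rightarrow> nat \<Rightarrow> real" where
  "cc T m = (if (m - 1) mod T = 0 then 7/8 else 1)"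
definition rr :: "nat \<Rightarrow> (nat \<Rightarrow> real) \<Rightarrow> nat \<Rightarrow> real" where
  "rr T x m = x m - cc T m * x (m - 1)"
definition gq :: "nat \<Rightarrow> nat \<Rightarrow> (nat \<Rightarrow> real) \<Rightarrow> nat \<Rightarrow> real" where
  "gq T n x m = (if 1 \<le> m \<and> m \<le> n then rr T x m - (if m < n then cc T (Suc m) * rr T x (Suc m) else 0) else 0)"

lemma cc_bounds: "7/8 \<le> cc T m" "cc T m \<le> 1"
  by (auto simp: cc_def)

lemma block_sum: "(\<Sum>m\<in>{1..T*t}. (f::nat\<Rightarrow>real) m) = (\<Sum>i<t. \<Sum>b\<in>{1..T}. f (i*T+b))"
proof (induction t)
  case 0 then show ?case by simp
next
  case (Suc t)
  have "{1..T * Suc t} = {1..T*t} \<union> {T*t+1..T*t+T}" by auto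
  moreover have "{1..T*t} \<inter> {T*t+1..T*t+T} = {}" by auto
  ultimately have "(\<Sum>m\<in>{1..T*Suc t}. f m) = (\<Sum>m\<in>{1..T*t}. f m) + (\<Sum>m\<in>{T*t+1..T*t+T}. f m)"
    by (simp add: sum.union_disjoint)
  moreover have "(\<Sum>m\<in>{T*t+1..T*t+T}. f m) = (\<Sum>b\<in>{1..T}. f (t*T+b))"
  proof -
    have "(\<Sum>m\<in>{1+T*t..T+T*t}. f m) = (\<Sum>b\<in>{1..T}. f (b + T*t))"
      by (rule sum.shift_bounds_cl_nat_ivl)
    then show ?thesis by (simp add: algebra_simps)
  qed
  ultimately show ?case using Suc by simp
qed

lemma qfun_eq:
  assumes "T \<ge> 1" "x 0 = 0"
  shows "qfun T t x = 1/2 * (\<Sum>m\<in>{1..T*t}. (rr T x m)^2)"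
proof -
  have inner: "(\<Sum>b\<in>{1..T}. (rr T x (i*T+b))^2) =
     ((7/8) * (if i = 0 then 0 else x (i*T)) - x (i*T+1))^2 + (\<Sum>j=1..T-1. (x (i*T+j+1) - x (i*T+j))^2)" for i
  proof -
    have "{1..T} = insert 1 ((\<lambda>j. j+1) ` {1..T-1})" using assms(1) by (auto simp: image_iff intro!: bexI[where x="_ - 1"])
    moreover have "1 \<notin> (\<lambda>j. j+1) ` {1..T-1}" by auto
    moreover have "inj_on (\<lambda>j. j+1) {1..T-1}" by auto
    ultimately have "(\<Sum>b\<in>{1..T}. (rr T x (i*T+b))^2) = (rr T x (i*T+1))^2 + (\<Sum>b\<in>(\<lambda>j. j+1) ` {1..T-1}. (rr T x (i*T+b))^2)"
      by simp
    also have "(\<Sum>b\<in>(\<lambda>j. j+1) ` {1..T-1}. (rr T x (i*T+b))^2) = (\<Sum>j\<in>{1..T-1}. (rr T x (i*T+(j+1)))^2)"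
      by (subst sum.reindex) auto
    finally have "(\<Sum>b\<in>{1..T}. (rr T x (i*T+b))^2) = (rr T x (i*T+1))^2 + (\<Sum>j\<in>{1..T-1}. (rr T x (i*T+(j+1)))^2)" .
    moreover have "(rr T x (i*T+1))^2 = ((7/8) * (if i = 0 then 0 else x (i*T)) - x (i*T+1))^2"
      using assms by (simp add: rr_def cc_def power2_commute)
    moreover have "rr T x (i*T+(j+1)) = x (i*T+j+1) - x (i*T+j)" if "j \<in> {1..T-1}" for j
    proof -
      have "(i*T+j) mod T = j" using that by auto
      then show ?thesis using that by (simp add: rr_def cc_def)
    qed
    ultimately show ?thesis by simp
  qed
  show ?thesis unfolding qfun_def block_sum inner ..
qed

lemma shift_down: "(f::nat\<Rightarrow>real) 0 = 0 \<Longrightarrow> (\<Sum>m\<in>{1..n}. f (m - 1)) = (\<Sum>m\<in>{1..n}. f m) - f n"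
  by (induction n) (auto simp: sum.cl_ivl_Suc)

lemma shift_up: "(\<Sum>m\<in>{1..n::nat}. (if m < n then (f::nat\<Rightarrow>real) (Suc m) else 0)) = (\<Sum>m\<in>{1..n}. f m) - (if n \<ge> 1 then f 1 else 0)"
proof (induction n)
  case 0 then show ?case by simp
next
  case (Suc n)
  have "(\<Sum>m\<in>{1..Suc n}. (if m < Suc n then f (Suc m) else 0)) = (\<Sum>m\<in>{1..n}. f (Suc m))"
    by (simp add: sum.cl_ivl_Suc)
  also have "\<dots> = (\<Sum>m\<in>{2..Suc n}. f m)"
    using sum.shift_bounds_cl_Suc_ivl[of f 1 n] by (simp add: numeral_2_eq_2)
  also have "\<dots> = (\<Sum>m\<in>{1..Suc n}. f m) - f 1"
  proof -
    have "{1..Suc n} = insert 1 {2..Suc n}" by auto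
    then show ?thesis by simp
  qed
  finally show ?case by simp
qed

lemma cut_last: "(\<Sum>m\<in>{1..n::nat}. (if m < n then (k::nat\<Rightarrow>real) m else 0)) = (\<Sum>m\<in>{1..n}. k m) - (if n \<ge> 1 then k n else 0)"
proof (cases n)
  case 0 then show ?thesis by simp
next
  case (Suc p)
  have "(\<Sum>m\<in>{1..Suc p}. (if m < Suc p then k m else 0)) = (\<Sum>m\<in>{1..p}. k m)"
    by (simp add: sum.cl_ivl_Suc)
  then show ?thesis using Suc by (simp add: sum.cl_ivl_Suc)
qed

lemma sbp:
  fixes s h c :: "nat \<Rightarrow> real"
  assumes "h 0 = 0"
  shows "(\<Sum>m\<in>{1..n}. s m * (h m - c m * h (m - 1))) =
         (\<Sum>m\<in>{1..n}. (s m - (if m < n then c (Suc m) * s (Suc m) else 0)) * h m)"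
proof -
  define k where "k m = s (Suc m) * c (Suc m) * h m" for m
  have "(\<Sum>m\<in>{1..n}. s m * c m * h (m - 1)) = (\<Sum>m\<in>{1..n}. k (m - 1))"
    by (intro sum.cong) (auto simp: k_def)
  also have "\<dots> = (\<Sum>m\<in>{1..n}. k m) - k n"
    using assms by (subst shift_down) (auto simp: k_def)
  also have "\<dots> = (\<Sum>m\<in>{1..n}. (if m < n then k m else 0))"
    by (subst cut_last) (cases n, auto simp: k_def assms)
  finally have a: "(\<Sum>m\<in>{1..n}. s m * c m * h (m - 1)) = (\<Sum>m\<in>{1..n}. (if m < n then c (Suc m) * s (Suc m) else 0) * h m)"
    by (simp add: k_def) (intro sum.cong, auto simp: k_def)
  have "(\<Sum>m\<in>{1..n}. s m * (h m - c m * h (m - 1))) = (\<Sum>m\<in>{1..n}. s m * h m) - (\<Sum>m\<in>{1..n}. s m * c m * h (m - 1))"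
    by (simp add: algebra_simps sum_subtractf)
  also have "\<dots> = (\<Sum>m\<in>{1..n}. (s m - (if m < n then c (Suc m) * s (Suc m) else 0)) * h m)"
    unfolding a by (simp add: algebra_simps sum_subtractf)
  finally show ?thesis .
qed

definition gg :: "nat \<Rightarrow> nat \<Rightarrow> (nat \<Rightarrow> real) \<Rightarrow> nat \<Rightarrow> real" where
  "gg T t x m = (if 1 \<le> m \<and> m \<le> T*t then gq T (T*t) x m + vd (yvec T t m) (x m) else 0)"

lemma yvec_pos: "1 \<le> m \<Longrightarrow> m \<le> T*t \<Longrightarrow> 0 < yvec T t m"
  by (simp add: yvec_def)

lemma sq_le_2: fixes a b c :: real assumes "c^2 \<le> 1" shows "(a - c*b)^2 \<le> 2*a^2 + 2*b^2"
proof -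
  have "0 \<le> (a + c*b)^2" by simp
  moreover have "c^2 * b^2 \<le> b^2" using assms by (simp add: mult_left_le_one_le)
  ultimately show ?thesis by (simp add: power2_eq_square algebra_simps)
qed

lemma cc_sq: "(cc T m)^2 \<le> 1" by (simp add: cc_def power_divide)

lemma rr_sq_bound:
  assumes "h 0 = 0"
  shows "(\<Sum>m\<in>{1..n}. (rr T h m)^2) \<le> 4 * (\<Sum>m\<in>{1..n}. (h m)^2)"
proof -
  have "(\<Sum>m\<in>{1..n}. (rr T h m)^2) \<le> (\<Sum>m\<in>{1..n}. 2*(h m)^2 + 2*(h (m-1))^2)"
    unfolding rr_def by (intro sum_mono sq_le_2 cc_sq)
  also have "\<dots> = 2*(\<Sum>m\<in>{1..n}. (h m)^2) + 2*(\<Sum>m\<in>{1..n}. (\<lambda>k. (h k)^2) (m-1))"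
    by (simp add: sum.distrib sum_distrib_left)
  also have "(\<Sum>m\<in>{1..n}. (\<lambda>k. (h k)^2) (m-1)) = (\<Sum>m\<in>{1..n}. (h m)^2) - (h n)^2"
    using assms by (subst shift_down) auto
  finally show ?thesis by (smt (verit) zero_le_power2)
qed

lemma gq_sq_bound_r:
  fixes r c :: "nat \<Rightarrow> real"
  assumes "\<And>m. (c m)^2 \<le> 1"
  shows "(\<Sum>m\<in>{1..n}. (r m - (if m < n then c (Suc m) * r (Suc m) else 0))^2) \<le> 4 * (\<Sum>m\<in>{1..n}. (r m)^2)"
proof -
  have "(\<Sum>m\<in>{1..n}. (r m - (if m < n then c (Suc m) * r (Suc m) else 0))^2)
     \<le> (\<Sum>m\<in>{1..n}. 2*(r m)^2 + 2*(if m < n then (r (Suc m))^2 else 0))"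
  proof (intro sum_mono)
    fix m show "(r m - (if m < n then c (Suc m) * r (Suc m) else 0))^2 \<le> 2*(r m)^2 + 2*(if m < n then (r (Suc m))^2 else 0)"
      using sq_le_2[OF assms, of "r m" "Suc m" "r (Suc m)"] by (auto simp: power2_eq_square)
  qed
  also have "\<dots> = 2*(\<Sum>m\<in>{1..n}. (r m)^2) + 2*(\<Sum>m\<in>{1..n}. (if m < n then (\<lambda>k. (r k)^2) (Suc m) else 0))"
    by (simp add: sum.distrib sum_distrib_left)
  also have "(\<Sum>m\<in>{1..n}. (if m < n then (\<lambda>k. (r k)^2) (Suc m) else 0)) = (\<Sum>m\<in>{1..n}. (r m)^2) - (if n \<ge> 1 then (r 1)^2 else 0)"
    by (rule shift_up)
  finally show ?thesis by (smt (verit) zero_le_power2)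
qed

lemma gq_sq_bound:
  assumes "h 0 = 0"
  shows "(\<Sum>m\<in>{1..n}. (gq T n h m)^2) \<le> 16 * (\<Sum>m\<in>{1..n}. (h m)^2)"
proof -
  have "(\<Sum>m\<in>{1..n}. (gq T n h m)^2) = (\<Sum>m\<in>{1..n}. (rr T h m - (if m < n then cc T (Suc m) * rr T h (Suc m) else 0))^2)"
    by (intro sum.cong) (auto simp: gq_def)
  also have "\<dots> \<le> 4 * (\<Sum>m\<in>{1..n}. (rr T h m)^2)"
    by (rule gq_sq_bound_r) (rule cc_sq)
  also have "\<dots> \<le> 4 * (4 * (\<Sum>m\<in>{1..n}. (h m)^2))"
    using rr_sq_bound[where h=h and T=T and n=n, OF assms] by simp
  finally show ?thesis by simp
qed

lemma rr_add: "rr T (\<lambda>i. x i + h i) m = rr T x m + rr T h m"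
  by (simp add: rr_def algebra_simps)
lemma rr_diff: "rr T (\<lambda>i. x i - h i) m = rr T x m - rr T h m"
  by (simp add: rr_def algebra_simps)
lemma gq_diff: "gq T n (\<lambda>i. x i - h i) m = gq T n x m - gq T n h m"
  by (simp add: gq_def rr_diff algebra_simps)

lemma gq_inner:
  assumes "h 0 = 0"
  shows "(\<Sum>m\<in>{1..n}. rr T x m * rr T h m) = (\<Sum>m\<in>{1..n}. gq T n x m * h m)"
proof -
  have "(\<Sum>m\<in>{1..n}. rr T x m * rr T h m) = (\<Sum>m\<in>{1..n}. rr T x m * (h m - cc T m * h (m - 1)))"
    by (simp add: rr_def)
  also have "\<dots> = (\<Sum>m\<in>{1..n}. (rr T x m - (if m < n then cc T (Suc m) * rr T x (Suc m) else 0)) * h m)"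
    by (rule sbp[where h=h, OF assms])
  also have "\<dots> = (\<Sum>m\<in>{1..n}. gq T n x m * h m)"
    by (intro sum.cong) (auto simp: gq_def)
  finally show ?thesis .
qed

lemma gfun_expand:
  assumes "T \<ge> 1" "x 0 = 0" "h 0 = 0"
  shows "gfun T t (\<lambda>i. x i + h i) - gfun T t x - (\<Sum>m\<in>{1..T*t}. gg T t x m * h m)
       = 1/2 * (\<Sum>m\<in>{1..T*t}. (rr T h m)^2)
         + (\<Sum>m\<in>{1..T*t}. vfun (yvec T t m) (x m + h m) - vfun (yvec T t m) (x m) - vd (yvec T t m) (x m) * h m)"
proof -
  let ?n = "T*t"
  have q1: "qfun T t (\<lambda>i. x i + h i) = 1/2 * (\<Sum>m\<in>{1..?n}. (rr T x m + rr T h m)^2)"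
    using qfun_eq[of T "\<lambda>i. x i + h i" t] assms by (simp add: rr_add)
  have q0: "qfun T t x = 1/2 * (\<Sum>m\<in>{1..?n}. (rr T x m)^2)"
    using qfun_eq[of T x t] assms by simp
  have sq: "(\<Sum>m\<in>{1..?n}. (rr T x m + rr T h m)^2) = (\<Sum>m\<in>{1..?n}. (rr T x m)^2) + 2 * (\<Sum>m\<in>{1..?n}. rr T x m * rr T h m) + (\<Sum>m\<in>{1..?n}. (rr T h m)^2)"
    by (simp add: power2_sum sum.distrib sum_distrib_left algebra_simps)
  have gsum: "(\<Sum>m\<in>{1..?n}. gg T t x m * h m) = (\<Sum>m\<in>{1..?n}. gq T ?n x m * h m) + (\<Sum>m\<in>{1..?n}. vd (yvec T t m) (x m) * h m)"
  proof -
    have "(\<Sum>m\<in>{1..?n}. gg T t x m * h m) = (\<Sum>m\<in>{1..?n}. gq T ?n x m * h m + vd (yvec T t m) (x m) * h m)"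
      by (intro sum.cong) (auto simp: gg_def algebra_simps)
    then show ?thesis by (simp add: sum.distrib)
  qed
  show ?thesis
    unfolding gfun_def q1 q0 sq gsum gq_inner[where h=h and x=x and T=T and n="T*t", OF assms(3), symmetric]
    by (simp add: sum_subtractf sum.distrib algebra_simps)
qed

lemma vnorm_L2: "vnorm n x = L2_set x {1..n}"
  by (simp add: vnorm_def L2_set_def)

lemma vnorm_nonneg: "0 \<le> vnorm n x"
  by (simp add: vnorm_L2)

lemma vnorm_sq: "(vnorm n x)^2 = (\<Sum>i\<in>{1..n}. (x i)^2)"
  by (simp add: vnorm_def sum_nonneg)

lemma vnorm_le_of_sum:
  assumes "(\<Sum>i\<in>{1..n}. (a i)^2) \<le> K^2 * (\<Sum>i\<in>{1..n}. (b i)^2)" "K \<ge> 0"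
  shows "vnorm n a \<le> K * vnorm n b"
proof -
  have "vnorm n a = sqrt (\<Sum>i\<in>{1..n}. (a i)^2)" by (simp add: vnorm_def)
  also have "\<dots> \<le> sqrt (K^2 * (\<Sum>i\<in>{1..n}. (b i)^2))" using assms(1) by (rule real_sqrt_le_mono)
  also have "\<dots> = K * vnorm n b" using assms(2) by (simp add: vnorm_def real_sqrt_mult)
  finally show ?thesis .
qed

lemma vecs_0: "x \<in> vecs n \<Longrightarrow> x 0 = 0"
  by (simp add: vecs_def)
lemma vecs_add: "x \<in> vecs n \<Longrightarrow> h \<in> vecs n \<Longrightarrow> (\<lambda>i. x i + h i) \<in> vecs n"
  by (simp add: vecs_def)
lemma vecs_diff: "x \<in> vecs n \<Longrightarrow> h \<in> vecs n \<Longrightarrow> (\<lambda>i. x i - h i) \<in> vecs n"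
  by (simp add: vecs_def)
lemma vecs_scale: "h \<in> vecs n \<Longrightarrow> (\<lambda>i. s * h i) \<in> vecs n"
  by (simp add: vecs_def)
lemma vecs_neg: "h \<in> vecs n \<Longrightarrow> (\<lambda>i. - h i) \<in> vecs n"
  by (simp add: vecs_def)
lemma vecs_zero: "(\<lambda>_. 0) \<in> vecs n"
  by (simp add: vecs_def)
lemma yvec_vecs: "yvec T t \<in> vecs (T*t)"
  by (simp add: vecs_def yvec_def)
lemma gg_vecs: "gg T t x \<in> vecs (T*t)"
  by (simp add: vecs_def gg_def)

lemma has_grad_gfun:
  assumes "T \<ge> 1" "x \<in> vecs (T*t)"
  shows "has_grad (T*t) (gfun T t) x (gg T t x)"
  unfolding has_grad_def
proof (intro conjI gg_vecs allI impI)
  fix \<epsilon> :: real assume "\<epsilon> > 0"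
  show "\<exists>\<delta>>0. \<forall>h\<in>vecs (T*t). vnorm (T*t) h < \<delta> \<longrightarrow>
        \<bar>gfun T t (\<lambda>i. x i + h i) - gfun T t x - (\<Sum>i=1..T*t. gg T t x i * h i)\<bar> \<le> \<epsilon> * vnorm (T*t) h"
  proof (intro exI[of _ "\<epsilon>/35"] conjI ballI impI)
    show "\<epsilon>/35 > 0" using \<open>\<epsilon> > 0\<close> by simp
    fix h assume h: "h \<in> vecs (T*t)" and hn: "vnorm (T*t) h < \<epsilon>/35"
    let ?S = "\<Sum>m\<in>{1..T*t}. (h m)^2"
    have e: "gfun T t (\<lambda>i. x i + h i) - gfun T t x - (\<Sum>i=1..T*t. gg T t x i * h i)
       = 1/2 * (\<Sum>m\<in>{1..T*t}. (rr T h m)^2)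
         + (\<Sum>m\<in>{1..T*t}. vfun (yvec T t m) (x m + h m) - vfun (yvec T t m) (x m) - vd (yvec T t m) (x m) * h m)"
      by (rule gfun_expand[where x=x and h=h, OF assms(1) vecs_0[OF assms(2)] vecs_0[OF h]])
    have a: "0 \<le> (\<Sum>m\<in>{1..T*t}. (rr T h m)^2)" by (simp add: sum_nonneg)
    have b: "(\<Sum>m\<in>{1..T*t}. (rr T h m)^2) \<le> 4 * ?S"
      by (rule rr_sq_bound[where h=h, OF vecs_0[OF h]])
    have c: "\<bar>\<Sum>m\<in>{1..T*t}. vfun (yvec T t m) (x m + h m) - vfun (yvec T t m) (x m) - vd (yvec T t m) (x m) * h m\<bar> \<le> 33 * ?S"
    proof -
      have "\<bar>\<Sum>m\<in>{1..T*t}. vfun (yvec T t m) (x m + h m) - vfun (yvec T t m) (x m) - vd (yvec T t m) (x m) * h m\<bar>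
          \<le> (\<Sum>m\<in>{1..T*t}. \<bar>vfun (yvec T t m) (x m + h m) - vfun (yvec T t m) (x m) - vd (yvec T t m) (x m) * h m\<bar>)"
        by (rule sum_abs)
      also have "\<dots> \<le> (\<Sum>m\<in>{1..T*t}. 33 * (h m)^2)"
        by (intro sum_mono v_rem yvec_pos) auto
      finally show ?thesis by (simp add: sum_distrib_left)
    qed
    have "\<bar>gfun T t (\<lambda>i. x i + h i) - gfun T t x - (\<Sum>i=1..T*t. gg T t x i * h i)\<bar> \<le> 35 * ?S"
      unfolding e abs_le_iff using a b c[unfolded abs_le_iff] by linarith
    also have "?S = (vnorm (T*t) h)^2" by (simp add: vnorm_sq)
    also have "35 * (vnorm (T*t) h)^2 \<le> \<epsilon> * vnorm (T*t) h"
    proof -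
      have "35 * vnorm (T*t) h \<le> \<epsilon>" using hn by simp
      then have "vnorm (T*t) h * (35 * vnorm (T*t) h) \<le> vnorm (T*t) h * \<epsilon>"
        using vnorm_nonneg by (intro mult_left_mono) auto
      then show ?thesis by (simp add: power2_eq_square algebra_simps)
    qed
    finally show "\<bar>gfun T t (\<lambda>i. x i + h i) - gfun T t x - (\<Sum>i=1..T*t. gg T t x i * h i)\<bar> \<le> \<epsilon> * vnorm (T*t) h" .
  qed
qed

lemma has_grad_unique:
  assumes g1: "has_grad n f x G1" and g2: "has_grad n f x G2"
  shows "G1 = G2"
proof -
  define D where "D i = G1 i - G2 i" for i
  have Dv: "D \<in> vecs n" using g1 g2 by (auto simp: has_grad_def D_def vecs_def)
  have "vnorm n D = 0"
  proof (rule ccontr)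
    assume "vnorm n D \<noteq> 0"
    then have dpos: "vnorm n D > 0" using vnorm_nonneg[of n D] by simp
    define d where "d = vnorm n D"
    have "d/4 > 0" using dpos d_def by simp
    obtain \<delta>1 where d1: "\<delta>1 > 0" and h1: "\<forall>h\<in>vecs n. vnorm n h < \<delta>1 \<longrightarrow>
        \<bar>f (\<lambda>i. x i + h i) - f x - (\<Sum>i=1..n. G1 i * h i)\<bar> \<le> d/4 * vnorm n h"
      using g1 \<open>d/4 > 0\<close> unfolding has_grad_def by blast
    obtain \<delta>2 where d2: "\<delta>2 > 0" and h2: "\<forall>h\<in>vecs n. vnorm n h < \<delta>2 \<longrightarrow>
        \<bar>f (\<lambda>i. x i + h i) - f x - (\<Sum>i=1..n. G2 i * h i)\<bar> \<le> d/4 * vnorm n h"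
      using g2 \<open>d/4 > 0\<close> unfolding has_grad_def by blast
    define s where "s = min \<delta>1 \<delta>2 / (2*d)"
    have spos: "s > 0" using d1 d2 dpos d_def by (simp add: s_def)
    define h where "h i = s * D i" for i
    have hv: "h \<in> vecs n" unfolding h_def by (rule vecs_scale[OF Dv])
    have hn: "vnorm n h = s * d"
      unfolding h_def vnorm_L2 d_def using spos by (simp add: L2_set_right_distrib[symmetric])
    have "s * d = min \<delta>1 \<delta>2 / 2" using dpos d_def by (simp add: s_def)
    then have hsmall: "vnorm n h < \<delta>1" "vnorm n h < \<delta>2" using hn d1 d2 by auto
    note i1 = h1[rule_format, OF hv hsmall(1)]
    note i2 = h2[rule_format, OF hv hsmall(2)]
    have "(\<Sum>i=1..n. G1 i * h i) - (\<Sum>i=1..n. G2 i * h i) = s * (\<Sum>i=1..n. (D i)^2)"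
      by (simp add: h_def D_def sum_subtractf[symmetric] sum_distrib_left power2_eq_square algebra_simps)
    also have "\<dots> = s * d^2" by (simp add: d_def vnorm_sq)
    finally have eq: "(\<Sum>i=1..n. G1 i * h i) - (\<Sum>i=1..n. G2 i * h i) = s * d^2" .
    have "s * d^2 \<le> d/4 * vnorm n h + d/4 * vnorm n h" using i1 i2 eq unfolding abs_le_iff by linarith
    also have "\<dots> = s * d^2 / 2" by (simp add: hn power2_eq_square)
    finally have "s * d^2 \<le> s * d^2 / 2" .
    moreover have "s * d^2 > 0" using spos dpos d_def by simp
    ultimately show False by simp
  qed
  then have "\<forall>i\<in>{1..n}. D i = 0" by (simp add: vnorm_L2 L2_set_eq_0_iff)
  then show ?thesis using g1 g2 by (auto simp: has_grad_def vecs_def D_def fun_eq_iff)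
qed

lemma grad_eq: "has_grad n f x G \<Longrightarrow> grad n f x = G"
  unfolding grad_def by (rule some_equality) (auto intro: has_grad_unique)

lemma grad_gfun: "T \<ge> 1 \<Longrightarrow> x \<in> vecs (T*t) \<Longrightarrow> grad (T*t) (gfun T t) x = gg T t x"
  by (rule grad_eq[OF has_grad_gfun])

lemma diff_gfun: "T \<ge> 1 \<Longrightarrow> differentiable_Rn (T*t) (gfun T t)"
  unfolding differentiable_Rn_def using has_grad_gfun by blast

lemma smooth_gfun:
  assumes "T \<ge> 1"
  shows "L_smooth (T*t) 37 (gfun T t)"
  unfolding L_smooth_def
proof (intro conjI diff_gfun[OF assms] ballI)
  fix x z assume x: "x \<in> vecs (T*t)" and z: "z \<in> vecs (T*t)"
  let ?n = "T*t"
  define d where "d i = x i - z i" for i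
  have d0: "d 0 = 0" using x z by (simp add: d_def vecs_def)
  have dd: "(\<lambda>i. x i - z i) = d" by (simp add: d_def fun_eq_iff)
  define A where "A m = gq T ?n d m" for m
  define B where "B m = vd (yvec T t m) (x m) - vd (yvec T t m) (z m)" for m
  have "vnorm ?n (\<lambda>i. grad ?n (gfun T t) x i - grad ?n (gfun T t) z i) = vnorm ?n (\<lambda>m. A m + B m)"
    unfolding grad_gfun[OF assms x] grad_gfun[OF assms z] vnorm_L2
    by (intro L2_set_cong) (auto simp: gg_def A_def B_def dd gq_diff[symmetric])
  also have "\<dots> \<le> vnorm ?n A + vnorm ?n B"
    unfolding vnorm_L2 by (rule L2_set_triangle_ineq)
  also have "vnorm ?n A \<le> 4 * vnorm ?n d"
    by (rule vnorm_le_of_sum) (use gq_sq_bound[where h=d, OF d0] in \<open>auto simp: A_def\<close>)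
  also have "vnorm ?n B \<le> 33 * vnorm ?n d"
  proof (rule vnorm_le_of_sum)
    have "(B i)^2 \<le> 33^2 * (d i)^2" if "i \<in> {1..?n}" for i
    proof -
      have "\<bar>B i\<bar> \<le> 33 * \<bar>d i\<bar>" unfolding B_def d_def
        by (rule vd_lip) (use that yvec_pos in auto)
      then have "\<bar>B i\<bar> \<le> \<bar>33 * d i\<bar>" by (simp add: abs_mult)
      then show ?thesis by (simp add: abs_le_square_iff power_mult_distrib)
    qed
    then show "(\<Sum>i\<in>{1..?n}. (B i)^2) \<le> 33^2 * (\<Sum>i\<in>{1..?n}. (d i)^2)"
      by (simp add: sum_distrib_left) (rule sum_mono; simp)
  qed simp
  finally show "vnorm ?n (\<lambda>i. grad ?n (gfun T t) x i - grad ?n (gfun T t) z i) \<le> 37 * vnorm ?n (\<lambda>i. x i - z i)"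
    unfolding dd by simp
qed

lemma qfun_nonneg: "0 \<le> qfun T t x"
  unfolding qfun_def by (intro mult_nonneg_nonneg sum_nonneg add_nonneg_nonneg) auto

lemma gfun_nonneg: "0 \<le> gfun T t x"
  unfolding gfun_def using qfun_nonneg
  by (intro add_nonneg_nonneg sum_nonneg vfun_nonneg yvec_pos) auto

lemma gfun_zero: "gfun T t (\<lambda>_. 0) = 0"
proof -
  have "vfun (yvec T t i) 0 = 0" if "i \<in> {1..T*t}" for i
    using yvec_pos[of i T t] that by (simp add: vfun_def)
  then show ?thesis unfolding gfun_def qfun_def by simp
qed

lemma gfun_inf: "(INF x\<in>vecs n. gfun T t x) = 0"
  by (rule cInf_eq_minimum) (auto intro!: image_eqI[where x="\<lambda>_. 0"] simp: vecs_zero gfun_zero gfun_nonneg)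

definition aa :: "nat \<Rightarrow> nat \<Rightarrow> nat \<Rightarrow> real" where
  "aa T m i = (if i = m then 1 else if Suc i = m then - cc T m else 0)"

definition B0 :: "nat \<Rightarrow> nat \<Rightarrow> nat \<Rightarrow> nat \<Rightarrow> real" where
  "B0 T t i j = (if i \<in> {1..T*t} \<and> j \<in> {1..T*t} then (\<Sum>m\<in>{1..T*t}. aa T m i * aa T m j) else 0)"

lemma aa_sum:
  assumes "x 0 = 0" "m \<in> {1..n}"
  shows "(\<Sum>i\<in>{1..n}. aa T m i * x i) = rr T x m"
proof -
  have "(\<Sum>i\<in>{1..n}. aa T m i * x i) = (\<Sum>i\<in>{1..n}. (if i = m then x i else 0) + (if i = m - 1 then - cc T m * x i else 0))"
    using assms(2) by (intro sum.cong) (auto simp: aa_def)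
  also have "\<dots> = x m + (if m - 1 \<in> {1..n} then - cc T m * x (m - 1) else 0)"
    using assms(2) by (simp add: sum.distrib)
  also have "\<dots> = rr T x m"
    using assms by (auto simp: rr_def)
  finally show ?thesis .
qed

lemma B0_quad:
  assumes "x 0 = 0"
  shows "(\<Sum>i=1..T*t. \<Sum>j=1..T*t. x i * B0 T t i j * x j) = (\<Sum>m\<in>{1..T*t}. (rr T x m)^2)"
proof -
  let ?A = "{1..T*t}"
  have "(\<Sum>i\<in>?A. \<Sum>j\<in>?A. x i * B0 T t i j * x j) = (\<Sum>i\<in>?A. \<Sum>j\<in>?A. \<Sum>m\<in>?A. (aa T m i * x i) * (aa T m j * x j))"
    by (intro sum.cong refl) (auto simp: B0_def sum_distrib_left sum_distrib_right algebra_simps)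
  also have "\<dots> = (\<Sum>i\<in>?A. \<Sum>m\<in>?A. \<Sum>j\<in>?A. (aa T m i * x i) * (aa T m j * x j))"
    by (rule sum.cong[OF refl], rule sum.swap)
  also have "\<dots> = (\<Sum>m\<in>?A. \<Sum>i\<in>?A. \<Sum>j\<in>?A. (aa T m i * x i) * (aa T m j * x j))"
    by (rule sum.swap)
  also have "\<dots> = (\<Sum>m\<in>?A. (\<Sum>i\<in>?A. aa T m i * x i) * (\<Sum>j\<in>?A. aa T m j * x j))"
    by (simp add: sum_product)
  also have "\<dots> = (\<Sum>m\<in>?A. (rr T x m)^2)"
  proof (intro sum.cong refl)
    fix m assume m: "m \<in> ?A"
    show "(\<Sum>i\<in>?A. aa T m i * x i) * (\<Sum>j\<in>?A. aa T m j * x j) = (rr T x m)^2"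
      unfolding aa_sum[where x=x, OF assms m] by (simp add: power2_eq_square)
  qed
  finally show ?thesis .
qed

definition Bprop :: "nat \<Rightarrow> nat \<Rightarrow> (nat \<Rightarrow> nat \<Rightarrow> real) \<Rightarrow> bool" where
  "Bprop T t B \<longleftrightarrow> (\<forall>i j. B i j = B j i)
      \<and> (\<forall>i j. i \<notin> {1..T*t} \<or> j \<notin> {1..T*t} \<longrightarrow> B i j = 0)
      \<and> (\<forall>x\<in>vecs (T*t). 0 \<le> (\<Sum>i=1..T*t. \<Sum>j=1..T*t. x i * B i j * x j))
      \<and> (\<forall>x\<in>vecs (T*t). qfun T t x = 1/2 * (\<Sum>i=1..T*t. \<Sum>j=1..T*t. x i * B i j * x j))"

lemma Bmat_Bprop: "Bmat T t = (THE B. Bprop T t B)"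
  unfolding Bmat_def Bprop_def ..

lemma B0_prop: "T \<ge> 1 \<Longrightarrow> Bprop T t (B0 T t)"
  unfolding Bprop_def
proof (intro conjI allI impI ballI)
  fix i j show "B0 T t i j = B0 T t j i" by (auto simp: B0_def mult.commute)
next
  fix i j :: nat assume "i \<notin> {1..T*t} \<or> j \<notin> {1..T*t}" then show "B0 T t i j = 0" by (auto simp: B0_def)
next
  fix x assume "x \<in> vecs (T*t)"
  then show "0 \<le> (\<Sum>i=1..T*t. \<Sum>j=1..T*t. x i * B0 T t i j * x j)"
    using B0_quad[where x=x and T=T and t=t] vecs_0 by (simp add: sum_nonneg)
next
  fix x assume x: "x \<in> vecs (T*t)" and "T \<ge> 1"
  then show "qfun T t x = 1/2 * (\<Sum>i=1..T*t. \<Sum>j=1..T*t. x i * B0 T t i j * x j)"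
    using B0_quad[where x=x and T=T and t=t] vecs_0 by (simp add: qfun_eq)
qed

lemma delta2:
  fixes D :: "nat \<Rightarrow> nat \<Rightarrow> real"
  assumes "finite A" "k \<in> A" "l \<in> A"
  shows "(\<Sum>a\<in>A. \<Sum>b\<in>A. (if a = k then 1 else 0) * D a b * (if b = l then 1 else 0)) = D k l"
proof -
  have "(\<Sum>a\<in>A. \<Sum>b\<in>A. (if a = k then 1 else 0) * D a b * (if b = l then 1 else 0))
      = (\<Sum>a\<in>A. \<Sum>b\<in>A. if a = k then (if b = l then D a b else 0) else 0)"
    by (intro sum.cong refl) auto
  also have "\<dots> = (\<Sum>a\<in>A. if a = k then (\<Sum>b\<in>A. if b = l then D a b else 0) else 0)"
    by (intro sum.cong refl) auto
  also have "\<dots> = D k l" using assms by simp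
  finally show ?thesis .
qed

lemma quad_two:
  fixes D :: "nat \<Rightarrow> nat \<Rightarrow> real"
  assumes "finite A" "i \<in> A" "j \<in> A"
  shows "(\<Sum>a\<in>A. \<Sum>b\<in>A. ((if a = i then 1 else 0) + (if a = j then 1 else 0)) * D a b * ((if b = i then 1 else 0) + (if b = j then 1 else 0)))
    = D i i + D i j + D j i + D j j"
proof -
  let ?e = "\<lambda>k l. (if l = k then 1 else 0) :: real"
  have "(\<Sum>a\<in>A. \<Sum>b\<in>A. ((if a = i then 1 else 0) + (if a = j then 1 else 0)) * D a b * ((if b = i then 1 else 0) + (if b = j then 1 else 0)))
    = (\<Sum>a\<in>A. \<Sum>b\<in>A. (if a = i then 1 else 0) * D a b * (if b = i then 1 else 0))
    + (\<Sum>a\<in>A. \<Sum>b\<in>A. (if a = i then 1 else 0) * D a b * (if b = j then 1 else 0))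
    + (\<Sum>a\<in>A. \<Sum>b\<in>A. (if a = j then 1 else 0) * D a b * (if b = i then 1 else 0))
    + (\<Sum>a\<in>A. \<Sum>b\<in>A. (if a = j then 1 else 0) * D a b * (if b = j then 1 else 0))"
  proof -
    have "(\<Sum>a\<in>A. \<Sum>b\<in>A. ((if a = i then 1 else 0) + (if a = j then 1 else 0)) * D a b * ((if b = i then 1 else 0) + (if b = j then 1 else 0)))
      = (\<Sum>a\<in>A. \<Sum>b\<in>A. (if a = i then 1 else 0) * D a b * (if b = i then 1 else 0)
         + (if a = i then 1 else 0) * D a b * (if b = j then 1 else 0)
         + (if a = j then 1 else 0) * D a b * (if b = i then 1 else 0)
         + (if a = j then 1 else 0) * D a b * (if b = j then 1 else 0))"
      by (intro sum.cong refl) (simp add: algebra_simps)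
    then show ?thesis by (simp only: sum.distrib)
  qed
  also have "\<dots> = D i i + D i j + D j i + D j j"
    using assms by (simp only: delta2)
  finally show ?thesis .
qed

lemma B_unique:
  assumes "Bprop T t B" "Bprop T t B'"
  shows "B = B'"
proof -
  define D where "D i j = B i j - B' i j" for i j
  have Q: "(\<Sum>a=1..T*t. \<Sum>b=1..T*t. x a * D a b * x b) = 0" if "x \<in> vecs (T*t)" for x
  proof -
    have "qfun T t x = 1/2 * (\<Sum>i=1..T*t. \<Sum>j=1..T*t. x i * B i j * x j)"
         "qfun T t x = 1/2 * (\<Sum>i=1..T*t. \<Sum>j=1..T*t. x i * B' i j * x j)"
      using assms that unfolding Bprop_def by auto
    then show ?thesis
      by (simp add: D_def algebra_simps sum_subtractf)
  qed
  have sym: "D i j = D j i" for i j using assms unfolding Bprop_def D_def by auto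
  have "D i j = 0" for i j
  proof (cases "i \<in> {1..T*t} \<and> j \<in> {1..T*t}")
    case False then show ?thesis using assms unfolding Bprop_def D_def by auto
  next
    case True
    define e where "e k l = ((if l = k then 1 else 0) :: real)" for k l :: nat
    have ev: "(\<lambda>l. e i l + e j l) \<in> vecs (T*t)" "(\<lambda>l. e i l + e i l) \<in> vecs (T*t)"
      using True by (auto simp: vecs_def e_def)
    have "D i i + D i i + D i i + D i i = 0"
      using Q[OF ev(2)] quad_two[of "{1..T*t}" i i D] True by (simp add: e_def)
    moreover have "D j j + D j j + D j j + D j j = 0"
    proof -
      have evj: "(\<lambda>l. e j l + e j l) \<in> vecs (T*t)" using True by (auto simp: vecs_def e_def)
      show ?thesis using Q[OF evj] quad_two[of "{1..T*t}" j j D] True by (simp add: e_def)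
    qed
    moreover have "D i i + D i j + D j i + D j j = 0"
      using Q[OF ev(1)] quad_two[of "{1..T*t}" i j D] True by (simp add: e_def)
    ultimately show ?thesis using sym[of i j] by linarith
  qed
  then show ?thesis by (auto simp: fun_eq_iff D_def)
qed

lemma Bmat_eq: "T \<ge> 1 \<Longrightarrow> Bmat T t = B0 T t"
  unfolding Bmat_Bprop by (rule the_equality) (auto intro: B0_prop B_unique[symmetric] dest: B_unique[OF _ B0_prop])

lemma upper_bound:
  assumes "T \<ge> 1" "x \<in> vecs (T*t)"
  shows "gfun T t x \<le> 1/2 * (\<Sum>i=1..T*t. \<Sum>j=1..T*t. x i * (Bmat T t i j + (if i = j then 1 else 0)) * x j)"
proof -
  let ?A = "{1..T*t}"
  have "(\<Sum>i\<in>?A. \<Sum>j\<in>?A. x i * (Bmat T t i j + (if i = j then 1 else 0)) * x j)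
      = (\<Sum>i\<in>?A. \<Sum>j\<in>?A. x i * B0 T t i j * x j) + (\<Sum>i\<in>?A. \<Sum>j\<in>?A. x i * (if i = j then 1 else 0) * x j)"
    by (simp add: Bmat_eq[OF assms(1)] algebra_simps sum.distrib)
  also have "(\<Sum>i\<in>?A. \<Sum>j\<in>?A. x i * (if i = j then 1 else 0) * x j) = (\<Sum>i\<in>?A. (x i)^2)"
  proof (intro sum.cong refl)
    fix i assume i: "i \<in> ?A"
    have "(\<Sum>j\<in>?A. x i * (if i = j then 1 else 0) * x j) = (\<Sum>j\<in>?A. if i = j then x i * x j else 0)"
      by (intro sum.cong) auto
    also have "\<dots> = (x i)^2" using i by (simp add: power2_eq_square)
    finally show "(\<Sum>j\<in>?A. x i * (if i = j then 1 else 0) * x j) = (x i)^2" .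
  qed
  finally have e: "(\<Sum>i\<in>?A. \<Sum>j\<in>?A. x i * (Bmat T t i j + (if i = j then 1 else 0)) * x j) = 2 * qfun T t x + (\<Sum>i\<in>?A. (x i)^2)"
    using B0_quad[of x T t] qfun_eq[where x=x and t=t, OF assms(1) vecs_0[OF assms(2)]] vecs_0[OF assms(2)] by simp
  have "(\<Sum>i\<in>?A. vfun (yvec T t i) (x i)) \<le> (\<Sum>i\<in>?A. (x i)^2/2)"
    by (intro sum_mono vfun_le yvec_pos) auto
  also have "(\<Sum>i\<in>?A. (x i)^2/2) = (\<Sum>i\<in>?A. (x i)^2)/2" by (simp add: sum_divide_distrib)
  finally show ?thesis unfolding e gfun_def by simp
qed

lemma yvec_rec:
  assumes "2 \<le> j" "j \<le> T*t"
  shows "yvec T t j = cc T j * yvec T t (j - 1)"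
proof -
  obtain p where p: "j = Suc (Suc p)" using assms(1) by (metis add_2_eq_Suc le_Suc_ex)
  have "yvec T t j = (7/8::real) ^ (Suc p div T)" using assms p by (simp add: yvec_def)
  moreover have "yvec T t (j - 1) = (7/8::real) ^ (p div T)" using assms p by (simp add: yvec_def)
  moreover have "cc T j = (if Suc p mod T = 0 then 7/8 else 1)" using p by (simp add: cc_def)
  ultimately show ?thesis by (simp add: div_Suc)
qed

lemma rr_yvec: "2 \<le> j \<Longrightarrow> j \<le> T*t \<Longrightarrow> rr T (yvec T t) j = 0"
  by (simp add: rr_def yvec_rec)

lemma has_grad_reflect:
  assumes "has_grad n g (\<lambda>i. w i - x i) G"
  shows "has_grad n (\<lambda>x. g (\<lambda>i. w i - x i)) x (\<lambda>i. - G i)"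
  unfolding has_grad_def
proof (intro conjI allI impI)
  show "(\<lambda>i. - G i) \<in> vecs n" using assms by (simp add: has_grad_def vecs_neg)
  fix \<epsilon> :: real assume "\<epsilon> > 0"
  then obtain \<delta> where d: "\<delta> > 0" and H: "\<forall>h\<in>vecs n. vnorm n h < \<delta> \<longrightarrow>
        \<bar>g (\<lambda>i. (w i - x i) + h i) - g (\<lambda>i. w i - x i) - (\<Sum>i=1..n. G i * h i)\<bar> \<le> \<epsilon> * vnorm n h"
    using assms unfolding has_grad_def by blast
  show "\<exists>\<delta>>0. \<forall>h\<in>vecs n. vnorm n h < \<delta> \<longrightarrow>
        \<bar>g (\<lambda>i. w i - (x i + h i)) - g (\<lambda>i. w i - x i) - (\<Sum>i=1..n. - G i * h i)\<bar> \<le> \<epsilon> * vnorm n h"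
  proof (intro exI[of _ \<delta>] conjI ballI impI d)
    fix h assume h: "h \<in> vecs n" "vnorm n h < \<delta>"
    have nn: "vnorm n (\<lambda>i. - h i) = vnorm n h" by (simp add: vnorm_def)
    have "\<bar>g (\<lambda>i. (w i - x i) + - h i) - g (\<lambda>i. w i - x i) - (\<Sum>i=1..n. G i * - h i)\<bar> \<le> \<epsilon> * vnorm n (\<lambda>i. - h i)"
      using H vecs_neg[OF h(1)] h(2) nn by auto
    moreover have "(\<lambda>i. (w i - x i) + - h i) = (\<lambda>i. w i - (x i + h i))" by (simp add: fun_eq_iff)
    moreover have "(\<Sum>i=1..n. G i * - h i) = (\<Sum>i=1..n. - G i * h i)" by simp
    ultimately show "\<bar>g (\<lambda>i. w i - (x i + h i)) - g (\<lambda>i. w i - x i) - (\<Sum>i=1..n. - G i * h i)\<bar> \<le> \<epsilon> * vnorm n h"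
      using nn by simp
  qed
qed

lemma zero_chain_g:
  assumes "T \<ge> 1"
  shows "zero_chain (T*t) (\<lambda>x. gfun T t (\<lambda>i. yvec T t i - x i))"
proof -
  let ?n = "T*t"
  have hg: "has_grad ?n (\<lambda>x. gfun T t (\<lambda>i. yvec T t i - x i)) x (\<lambda>i. - gg T t (\<lambda>i. yvec T t i - x i) i)"
    if "x \<in> vecs ?n" for x
    by (rule has_grad_reflect, rule has_grad_gfun[OF assms vecs_diff[OF yvec_vecs that]])
  show ?thesis
    unfolding zero_chain_def differentiable_Rn_def
  proof (intro conjI ballI allI impI)
    fix x assume "x \<in> vecs ?n" then show "\<exists>G. has_grad ?n (\<lambda>x. gfun T t (\<lambda>i. yvec T t i - x i)) x G"
      using hg by blast
  next
    fix x k assume x: "x \<in> vecs ?n" and k: "k \<le> ?n" and supp: "{i. x i \<noteq> 0} \<subseteq> {1..k}"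
    define z where "z i = yvec T t i - x i" for i
    have zeq: "(\<lambda>i. yvec T t i - x i) = z" by (simp add: z_def fun_eq_iff)
    have zy: "z j = yvec T t j" if "j > k" for j using supp that by (auto simp: z_def)
    show "{i. grad ?n (\<lambda>x. gfun T t (\<lambda>i. yvec T t i - x i)) x i \<noteq> 0} \<subseteq> {1..k+1}"
    proof
      fix i assume "i \<in> {i. grad ?n (\<lambda>x. gfun T t (\<lambda>i. yvec T t i - x i)) x i \<noteq> 0}"
      then have ne: "gg T t z i \<noteq> 0" using grad_eq[OF hg[OF x]] zeq by simp
      show "i \<in> {1..k+1}"
      proof (rule ccontr)
        assume "i \<notin> {1..k+1}"
        moreover have "1 \<le> i" "i \<le> ?n" using ne by (auto simp: gg_def split: if_splits)
        ultimately have ik: "i \<ge> k+2" by auto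
        have r0: "rr T z j = 0" if "i \<le> j" "j \<le> ?n" for j
        proof -
          have "rr T z j = rr T (yvec T t) j" using zy ik that by (simp add: rr_def)
          also have "\<dots> = 0" using rr_yvec ik that by simp
          finally show ?thesis .
        qed
        have "vd (yvec T t i) (z i) = 0" using zy[of i] ik vd_y yvec_pos \<open>1 \<le> i\<close> \<open>i \<le> ?n\<close> by simp
        moreover have "gq T ?n z i = 0" using r0[of i] r0[of "Suc i"] \<open>1 \<le> i\<close> \<open>i \<le> ?n\<close> by (simp add: gq_def)
        ultimately have "gg T t z i = 0" by (simp add: gg_def)
        then show False using ne by simp
      qed
    qed
  qed
qed

lemma backward:
  fixes x c u G :: "nat \<Rightarrow> real"
  assumes a: "a \<le> n"
    and x0: "x 0 = 0"
    and cb: "\<And>m. 7/8 \<le> c m \<and> c m \<le> 1"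
    and Grow: "\<And>m. 1 \<le> m \<Longrightarrow> m < n \<Longrightarrow> G m = (x m - c m * x (m-1)) - c (Suc m) * (x (Suc m) - c (Suc m) * x m) + u m"
    and Gb: "\<And>m. 1 \<le> m \<Longrightarrow> m \<le> n \<Longrightarrow> \<bar>G m\<bar> \<le> \<gamma>"
    and gpos: "0 \<le> \<gamma>"
    and before: "\<And>m. 1 \<le> m \<Longrightarrow> m < a \<Longrightarrow> u m = x m"
  shows "k < a \<Longrightarrow> x k \<le> \<gamma> + max (c (Suc k) * x (Suc k)) 0 / 2"
proof (induction k)
  case 0 then show ?case using x0 gpos by simp
next
  case (Suc k)
  let ?X = "x (Suc k)" and ?c1 = "c (Suc k)" and ?c2 = "c (Suc (Suc k))"
  show ?case
  proof (cases "?X \<le> 0")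
    case True then show ?thesis using gpos by simp
  next
    case False
    have c1: "7/8 \<le> ?c1" "?c1 \<le> 1" and c2: "7/8 \<le> ?c2" "?c2 \<le> 1" using cb by auto
    have "0 < ?c1 * ?X" using c1 False by (intro mult_pos_pos) auto
    then have ih: "x k \<le> \<gamma> + ?c1 * ?X / 2" using Suc by (simp add: max_def)
    have "?c1 * x k \<le> ?c1 * (\<gamma> + ?c1 * ?X / 2)" using ih c1 by (intro mult_left_mono) auto
    moreover have "?c1 * \<gamma> \<le> \<gamma>" using c1 gpos by (simp add: mult_left_le_one_le)
    moreover have "?c1 * ?c1 * ?X \<le> ?X"
    proof -
      have "?c1 * ?c1 \<le> 1" using c1 by (simp add: mult_le_one)
      then show ?thesis using False by (simp add: mult_left_le_one_le)
    qed
    ultimately have A: "?c1 * x k \<le> \<gamma> + ?X/2" by (simp add: algebra_simps)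
    have B: "?c2 * ?c2 * ?X \<ge> 49/64 * ?X"
    proof -
      have "?c2 * ?c2 \<ge> 7/8 * (7/8)" using c2 by (intro mult_mono) auto
      then show ?thesis using False by (intro mult_right_mono) auto
    qed
    have row: "G (Suc k) = 2 * ?X + ?c2 * ?c2 * ?X - ?c1 * x k - ?c2 * x (Suc (Suc k))"
      using Grow[of "Suc k"] Suc.prems a before[of "Suc k"] by (simp add: algebra_simps)
    have "G (Suc k) \<le> \<gamma>" using Gb[of "Suc k"] Suc.prems a by simp
    then have "2 * ?X \<le> 2 * \<gamma> + ?c2 * x (Suc (Suc k))" using row A B False by linarith
    then show ?thesis by (simp add: max_def)
  qed
qed

lemma entry:
  fixes x c y u G :: "nat \<Rightarrow> real"
  assumes a: "1 \<le> a" "a \<le> n"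
    and x0: "x 0 = 0"
    and cb: "\<And>m. 7/8 \<le> c m \<and> c m \<le> 1"
    and yrec: "\<And>m. 1 \<le> m \<Longrightarrow> m < n \<Longrightarrow> y (Suc m) = c (Suc m) * y m"
    and ypos: "\<And>m. 1 \<le> m \<Longrightarrow> m \<le> n \<Longrightarrow> 0 < y m"
    and Grow: "\<And>m. 1 \<le> m \<Longrightarrow> m < n \<Longrightarrow> G m = (x m - c m * x (m-1)) - c (Suc m) * (x (Suc m) - c (Suc m) * x m) + u m"
    and Gn: "G n = (x n - c n * x (n-1)) + u n"
    and Gb: "\<And>m. 1 \<le> m \<Longrightarrow> m \<le> n \<Longrightarrow> \<bar>G m\<bar> \<le> \<gamma>"
    and before: "\<And>m. 1 \<le> m \<Longrightarrow> m < a \<Longrightarrow> u m = x m"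
    and atx: "31/32 * y a < x a" and atu: "0 \<le> u a"
    and after: "\<And>m. a < m \<Longrightarrow> m \<le> n \<Longrightarrow> 33/32 * y m < x m \<Longrightarrow> u m = x m"
  shows "y a / 10 \<le> \<gamma>"
proof (rule ccontr)
  assume "\<not> y a / 10 \<le> \<gamma>"
  then have gsmall: "\<gamma> < y a / 10" by simp
  define r where "r m = x m - c m * x (m - 1)" for m
  have gpos: "0 \<le> \<gamma>" using Gb[of a] a by simp
  have ya: "0 < y a" using ypos a by simp
  have xa: "0 < x a" using atx ya by simp
  have ca: "7/8 \<le> c a" "c a \<le> 1" using cb by auto
  have bk: "x (a - 1) \<le> \<gamma> + max (c a * x a) 0 / 2"
    using backward[where x=x and c=c and u=u and G=G and \<gamma>=\<gamma> and a=a and n=n and k="a - 1", OF a(2) x0 cb Grow Gb gpos before] a by simp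
  have "0 < c a * x a" using xa ca by (intro mult_pos_pos) auto
  then have bk': "x (a - 1) \<le> \<gamma> + c a * x a / 2" using bk by (simp add: max_def)
  have ra: "r a \<ge> x a / 2 - \<gamma>"
  proof -
    have "c a * x (a - 1) \<le> c a * (\<gamma> + c a * x a / 2)" using bk' ca by (intro mult_left_mono) auto
    moreover have "c a * \<gamma> \<le> \<gamma>" using ca gpos by (simp add: mult_left_le_one_le)
    moreover have "c a * c a * x a \<le> x a"
    proof -
      have "c a * c a \<le> 1" using ca by (simp add: mult_le_one)
      then show ?thesis using xa by (simp add: mult_left_le_one_le)
    qed
    moreover have "c a * (\<gamma> + c a * x a / 2) = c a * \<gamma> + c a * c a * x a / 2" by (simp add: algebra_simps)
    ultimately show ?thesis unfolding r_def by linarith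
  qed
  show False
  proof (cases "a = n")
    case True
    have "G n \<le> \<gamma>" using Gb[of n] a by simp
    moreover have "G n = r a + u a" using Gn True by (simp add: r_def)
    ultimately show False using ra atu atx gsmall ya by linarith
  next
    case False
    then have an: "a < n" using a by simp
    define R where "R = 31/64 * y a - 2 * \<gamma>"
    have Rg: "\<gamma> < R" "y a / 16 \<le> R" "0 < R" unfolding R_def using gsmall ya gpos by linarith+
    have key: "\<And>m. 1 \<le> m \<Longrightarrow> m < n \<Longrightarrow> c (Suc m) * r (Suc m) = r m + u m - G m"
  proof -
    fix m assume "1 \<le> m" "m < n"
    moreover have "Suc m - 1 = m" by simp
    ultimately show "c (Suc m) * r (Suc m) = r m + u m - G m" using Grow[of m] unfolding r_def by (simp only:)
  qed
    have step_r: "r (Suc m) \<ge> R" if "c (Suc m) * r (Suc m) \<ge> R" for m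
    proof -
      have cs: "7/8 \<le> c (Suc m)" "c (Suc m) \<le> 1" using cb by auto
      have p: "0 < c (Suc m) * r (Suc m)" using that Rg by linarith
      have "0 < r (Suc m)"
      proof (rule ccontr)
        assume "\<not> 0 < r (Suc m)"
        then have "c (Suc m) * r (Suc m) \<le> 0" using cs by (intro mult_nonneg_nonpos) auto
        then show False using p by linarith
      qed
      then have "c (Suc m) * r (Suc m) \<le> r (Suc m)" using cs by (simp add: mult_left_le_one_le)
      then show ?thesis using that by simp
    qed
    have xs: "x (Suc m) = c (Suc m) * x m + r (Suc m)" for m by (simp add: r_def)
    have base: "r (Suc a) \<ge> R"
    proof (rule step_r)
      have "G a \<le> \<gamma>" using Gb[of a] a by simp
      then show "c (Suc a) * r (Suc a) \<ge> R" using key[OF a(1) an] ra atu atx unfolding R_def by linarith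
    qed
    have cs0: "\<And>m. 7/8 \<le> c m \<and> c m \<le> 1" by (rule cb)
    have inv: "r (Suc a + j) \<ge> R \<and> x (Suc a + j) \<ge> R \<and> 33/32 * y (Suc a + j) < x (Suc a + j)"
      if "Suc a + j \<le> n" for j
      using that
    proof (induction j)
      case 0
      have cs: "7/8 \<le> c (Suc a)" "c (Suc a) \<le> 1" using cs0 by auto
      have cx0: "c (Suc a) * (31/32 * y a) < c (Suc a) * x a" using atx cs by (intro mult_strict_left_mono) auto
      have cx: "31/32 * (c (Suc a) * y a) < c (Suc a) * x a" using cx0 by (simp add: mult.left_commute)
      have cy: "c (Suc a) * y a \<le> y a" using cs ya by (simp add: mult_left_le_one_le)
      have c0: "0 \<le> c (Suc a) * x a" using cs xa by simp
      have ys: "y (Suc a) = c (Suc a) * y a" using yrec[OF a(1) an] .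
      have "r (Suc a) \<ge> R \<and> x (Suc a) \<ge> R \<and> 33/32 * y (Suc a) < x (Suc a)"
        unfolding ys using base xs[of a] cx cy c0 Rg by linarith
      then show ?case by simp
    next
      case (Suc j)
      let ?m = "Suc a + j"
      have IH: "r ?m \<ge> R" "x ?m \<ge> R" "33/32 * y ?m < x ?m" using Suc by auto
      have m1: "1 \<le> ?m" "?m < n" using Suc.prems by auto
      have um: "u ?m = x ?m" using after[of ?m] IH m1 by simp
      have "G ?m \<le> \<gamma>" using Gb[of ?m] m1 by simp
      then have "c (Suc ?m) * r (Suc ?m) \<ge> R" using key[OF m1] um IH Rg by linarith
      then have rs: "r (Suc ?m) \<ge> R" by (rule step_r)
      have cs: "7/8 \<le> c (Suc ?m)" "c (Suc ?m) \<le> 1" using cs0 by auto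
      have c0: "0 \<le> c (Suc ?m) * x ?m" using cs IH Rg by simp
      have cx0: "c (Suc ?m) * (33/32 * y ?m) < c (Suc ?m) * x ?m" using IH cs by (intro mult_strict_left_mono) auto
      have cx: "33/32 * (c (Suc ?m) * y ?m) < c (Suc ?m) * x ?m" using cx0 by (simp add: mult.left_commute)
      have ys: "y (Suc ?m) = c (Suc ?m) * y ?m" using yrec[OF m1] .
      have "r (Suc ?m) \<ge> R \<and> x (Suc ?m) \<ge> R \<and> 33/32 * y (Suc ?m) < x (Suc ?m)"
        unfolding ys using rs c0 cx xs[of ?m] Rg by linarith
      then show ?case by simp
    qed
    obtain j where j0: "n = Suc (a + j)" using less_imp_Suc_add[OF an] by blast
    then have j: "n = Suc a + j" by simp
    have fin: "r n \<ge> R" "x n \<ge> R" "33/32 * y n < x n" using inv[of j] j by auto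
    have "u n = x n" using after[of n] fin an by simp
    moreover have "G n \<le> \<gamma>" using Gb[of n] a by simp
    moreover have "G n = r n + u n" using Gn by (simp add: r_def)
    ultimately show False using fin Rg by linarith
  qed
qed

lemma block_div_sum:
  fixes f :: "nat \<Rightarrow> real"
  assumes "T \<ge> 1"
  shows "(\<Sum>k<q*T. f (k div T)) = T * (\<Sum>j<q. f j)"
proof (induction q)
  case 0 then show ?case by simp
next
  case (Suc q)
  have "{..<Suc q * T} = {..<q*T} \<union> {q*T..<q*T+T}" by auto
  moreover have "{..<q*T} \<inter> {q*T..<q*T+T} = {}" by auto
  ultimately have "(\<Sum>k<Suc q*T. f (k div T)) = (\<Sum>k<q*T. f (k div T)) + (\<Sum>k\<in>{q*T..<q*T+T}. f (k div T))"
    by (simp add: sum.union_disjoint)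
  moreover have "(\<Sum>k\<in>{q*T..<q*T+T}. f (k div T)) = T * f q"
  proof -
    have "(\<Sum>k\<in>{0+q*T..<T+q*T}. f (k div T)) = (\<Sum>i\<in>{0..<T}. f ((i + q*T) div T))"
      by (rule sum.shift_bounds_nat_ivl)
    also have "\<dots> = (\<Sum>i\<in>{0..<T}. f q)"
      using assms by (intro sum.cong refl) auto
    finally show ?thesis by (simp add: add.commute)
  qed
  ultimately show ?case using Suc by (simp add: algebra_simps)
qed

lemma geo_bound:
  assumes T: "T \<ge> 1" and a: "1 \<le> a" "a \<le> T*t"
  shows "(\<Sum>m\<in>{a..T*t}. (yvec T t m)^2) \<le> (yvec T t a)^2 * (T * (64/15))"
proof -
  let ?\<rho> = "49/64 :: real"
  have ysq: "(yvec T t m)^2 = ?\<rho> ^ ((m - 1) div T)" if "1 \<le> m" "m \<le> T*t" for m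
  proof -
    have "yvec T t m = (7/8) ^ ((m - 1) div T)" using that by (simp add: yvec_def)
    then have "(yvec T t m)^2 = (7/8) ^ ((m - 1) div T) * (7/8) ^ ((m - 1) div T)" by (simp add: power2_eq_square)
    also have "\<dots> = (7/8 * (7/8)) ^ ((m - 1) div T)" by (rule power_mult_distrib[symmetric])
    finally show ?thesis by simp
  qed
  have ya: "(yvec T t a)^2 = ?\<rho> ^ ((a - 1) div T)" using ysq a by simp
  have each: "(yvec T t m)^2 \<le> (yvec T t a)^2 * ?\<rho> ^ ((m - a) div T)" if "m \<in> {a..T*t}" for m
  proof -
    have "(a - 1) div T + (m - a) div T \<le> ((a - 1) + (m - a)) div T"
      by (subst div_add1_eq) simp
    also have "(a - 1) + (m - a) = m - 1" using that a by auto
    finally have le: "(a - 1) div T + (m - a) div T \<le> (m - 1) div T" .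
    have "(yvec T t m)^2 = ?\<rho> ^ ((m - 1) div T)" using ysq that a by auto
    also have "\<dots> \<le> ?\<rho> ^ ((a - 1) div T + (m - a) div T)"
      by (rule power_decreasing[OF le]) auto
    also have "\<dots> = (yvec T t a)^2 * ?\<rho> ^ ((m - a) div T)" by (simp add: ya power_add)
    finally show ?thesis .
  qed
  have "(\<Sum>m\<in>{a..T*t}. (yvec T t m)^2) \<le> (\<Sum>m\<in>{a..T*t}. (yvec T t a)^2 * ?\<rho> ^ ((m - a) div T))"
    by (rule sum_mono[OF each])
  also have "\<dots> = (yvec T t a)^2 * (\<Sum>m\<in>{a..T*t}. ?\<rho> ^ ((m - a) div T))"
    by (simp add: sum_distrib_left)
  finally have F: "(\<Sum>m\<in>{a..T*t}. (yvec T t m)^2) \<le> (yvec T t a)^2 * (\<Sum>m\<in>{a..T*t}. ?\<rho> ^ ((m - a) div T))" .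
  have S: "(\<Sum>m\<in>{a..T*t}. ?\<rho> ^ ((m - a) div T)) \<le> T * (64/15)"
  proof -
  have "(\<Sum>m\<in>{a..T*t}. ?\<rho> ^ ((m - a) div T)) = (\<Sum>k\<in>{0..T*t - a}. ?\<rho> ^ (k div T))"
  proof -
    have "(\<Sum>m\<in>{0+a..(T*t-a)+a}. ?\<rho> ^ ((m - a) div T)) = (\<Sum>k\<in>{0..T*t-a}. ?\<rho> ^ ((k + a - a) div T))"
      by (rule sum.shift_bounds_cl_nat_ivl)
    then show ?thesis using a by simp
  qed
  also have "\<dots> \<le> (\<Sum>k<(T*t - a + 1)*T. ?\<rho> ^ (k div T))"
  proof (rule sum_mono2)
    show "{0..T*t - a} \<subseteq> {..<(T*t - a + 1)*T}"
    proof
      fix k assume "k \<in> {0..T*t - a}"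
      then have "k < T*t - a + 1" by simp
      also have "\<dots> \<le> (T*t - a + 1)*T" using T by (cases T) auto
      finally show "k \<in> {..<(T*t - a + 1)*T}" by simp
    qed
  qed auto
  also have "\<dots> = T * (\<Sum>j<T*t - a + 1. ?\<rho> ^ j)"
    by (rule block_div_sum[OF T])
  also have "\<dots> \<le> T * (64/15)"
  proof -
  have gpb: "(\<Sum>j<T*t - a + 1. ?\<rho> ^ j) \<le> 64/15"
  proof -
    have gp: "(\<Sum>j<N. ?\<rho> ^ j) = (1 - ?\<rho> ^ N) / (1 - ?\<rho>)" for N
      unfolding sum_gp_strict by simp
    have "(\<Sum>j<T*t - a + 1. ?\<rho> ^ j) = (1 - ?\<rho> ^ (T*t - a + 1)) / (1 - ?\<rho>)"
      by (rule gp)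
    also have "\<dots> \<le> 1 / (1 - ?\<rho>)"
      by (intro divide_right_mono) auto
    finally show ?thesis by simp
  qed
  then show "T * (\<Sum>j<T*t - a + 1. ?\<rho> ^ j) \<le> T * (64/15)"
    by (intro mult_left_mono) auto
  qed
  finally show ?thesis .
  qed
  then have "(yvec T t a)^2 * (\<Sum>m\<in>{a..T*t}. ?\<rho> ^ ((m - a) div T)) \<le> (yvec T t a)^2 * (T * (64/15))"
    by (intro mult_left_mono) auto
  with F show ?thesis by linarith
qed

lemma abs_le_vnorm: "m \<in> {1..n} \<Longrightarrow> \<bar>f m\<bar> \<le> vnorm n f"
proof -
  assume m: "m \<in> {1..n}"
  have "(f m)^2 \<le> (\<Sum>i\<in>{1..n}. (f i)^2)"
    using m by (intro member_le_sum) auto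
  then have "sqrt ((f m)^2) \<le> vnorm n f" unfolding vnorm_def by (rule real_sqrt_le_mono)
  then show ?thesis by simp
qed

definition bump :: "real \<Rightarrow> real \<Rightarrow> bool" where
  "bump y x \<longleftrightarrow> 31/32*y < x \<and> x < 33/32*y"

lemma PL_main:
  assumes T: "T \<ge> 1" and x: "x \<in> vecs (T*t)"
  shows "2 * gfun T t x \<le> 1000 * T * (vnorm (T*t) (gg T t x))^2"
proof -
  let ?n = "T*t"
  define G where "G = gg T t x"
  define \<gamma> where "\<gamma> = vnorm ?n G"
  define y where "y = yvec T t"
  define u where "u m = vd (y m) (x m)" for m
  have x0: "x 0 = 0" using x by (rule vecs_0)
  have gpos: "0 \<le> \<gamma>" unfolding \<gamma>_def by (rule vnorm_nonneg)
  have ypos: "\<And>m. 1 \<le> m \<Longrightarrow> m \<le> ?n \<Longrightarrow> 0 < y m" unfolding y_def by (rule yvec_pos)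
  have Gm: "G m = gq T ?n x m + u m" if "m \<in> {1..?n}" for m
    using that by (simp add: G_def gg_def u_def y_def)
  have F1: "(\<Sum>m\<in>{1..?n}. G m * x m) = (\<Sum>m\<in>{1..?n}. (rr T x m)^2) + (\<Sum>m\<in>{1..?n}. x m * u m)"
  proof -
    have "(\<Sum>m\<in>{1..?n}. G m * x m) = (\<Sum>m\<in>{1..?n}. gq T ?n x m * x m) + (\<Sum>m\<in>{1..?n}. x m * u m)"
    proof -
      have "(\<Sum>m\<in>{1..?n}. G m * x m) = (\<Sum>m\<in>{1..?n}. gq T ?n x m * x m + x m * u m)"
        by (intro sum.cong refl) (simp add: Gm algebra_simps)
      then show ?thesis by (simp add: sum.distrib)
    qed
    also have "(\<Sum>m\<in>{1..?n}. gq T ?n x m * x m) = (\<Sum>m\<in>{1..?n}. rr T x m * rr T x m)"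
      by (rule gq_inner[where h=x, OF x0, symmetric])
    finally show ?thesis by (simp add: power2_eq_square)
  qed
  have F2: "(\<Sum>m\<in>{1..?n}. G m * x m) \<le> \<gamma> * vnorm ?n x"
  proof -
    have "(\<Sum>m\<in>{1..?n}. G m * x m) \<le> (\<Sum>m\<in>{1..?n}. \<bar>G m\<bar> * \<bar>x m\<bar>)"
      by (intro sum_mono) (simp add: abs_mult[symmetric])
    also have "\<dots> \<le> L2_set G {1..?n} * L2_set x {1..?n}" by (rule L2_set_mult_ineq)
    finally show ?thesis by (simp add: \<gamma>_def vnorm_L2)
  qed
  have F3: "2 * gfun T t x \<le> (\<Sum>m\<in>{1..?n}. (rr T x m)^2) + (\<Sum>m\<in>{1..?n}. (x m)^2)"
  proof -
    have "(\<Sum>m\<in>{1..?n}. vfun (y m) (x m)) \<le> (\<Sum>m\<in>{1..?n}. (x m)^2/2)"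
      by (intro sum_mono vfun_le ypos) auto
    also have "\<dots> = (\<Sum>m\<in>{1..?n}. (x m)^2) / 2" by (simp add: sum_divide_distrib)
    finally have "(\<Sum>m\<in>{1..?n}. vfun (y m) (x m)) \<le> (\<Sum>m\<in>{1..?n}. (x m)^2) / 2" .
    moreover have "gfun T t x = 1/2 * (\<Sum>m\<in>{1..?n}. (rr T x m)^2) + (\<Sum>m\<in>{1..?n}. vfun (y m) (x m))"
      unfolding gfun_def qfun_eq[where x=x and t=t, OF T x0] y_def ..
    ultimately show ?thesis by linarith
  qed
  have Gb: "\<bar>G m\<bar> \<le> \<gamma>" if "1 \<le> m" "m \<le> ?n" for m
    unfolding \<gamma>_def by (rule abs_le_vnorm) (use that in auto)
  define N where "N = (\<Sum>m\<in>{1..?n}. if bump (y m) (x m) then 0 else (x m)^2)"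
  define W where "W = (\<Sum>m\<in>{1..?n}. if bump (y m) (x m) then (x m)^2 else 0)"
  define Q where "Q = (\<Sum>m\<in>{1..?n}. (rr T x m)^2)"
  have Qpos: "0 \<le> Q" unfolding Q_def by (simp add: sum_nonneg)
  have Npos: "0 \<le> N" unfolding N_def by (simp add: sum_nonneg)
  have Wpos: "0 \<le> W" unfolding W_def by (simp add: sum_nonneg)
  have NW: "(\<Sum>m\<in>{1..?n}. (x m)^2) = N + W"
    unfolding N_def W_def sum.distrib[symmetric] by (intro sum.cong refl) auto
  have xu: "N \<le> (\<Sum>m\<in>{1..?n}. x m * u m)"
    unfolding N_def
  proof (rule sum_mono)
    fix m assume m: "m \<in> {1..?n}"
    have yp: "0 < y m" using m ypos by auto
    show "(if bump (y m) (x m) then 0 else (x m)^2) \<le> x m * u m"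
    proof (cases "bump (y m) (x m)")
      case True then show ?thesis using x_vd_nonneg[OF yp] by (simp add: u_def)
    next
      case False then show ?thesis using vd_out[OF yp] by (simp add: u_def bump_def power2_eq_square)
    qed
  qed
  have vx: "vnorm ?n x = sqrt (N + W)" using NW by (simp add: vnorm_def)
  define E where "E = Q + N"
  have E1: "E \<le> \<gamma> * sqrt (E + W)"
  proof -
    have "E \<le> (\<Sum>m\<in>{1..?n}. G m * x m)" using F1 xu by (simp add: E_def Q_def)
    also have "\<dots> \<le> \<gamma> * sqrt (N + W)" using F2 vx by simp
    also have "\<dots> \<le> \<gamma> * sqrt (E + W)" using Qpos gpos by (intro mult_left_mono real_sqrt_le_mono) (auto simp: E_def)
    finally show ?thesis .
  qed
  have E2: "2 * gfun T t x \<le> E + W" using F3 NW by (simp add: E_def Q_def)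
  have Epos: "0 \<le> E" using Qpos Npos by (simp add: E_def)
  have Esq: "E^2 \<le> \<gamma>^2 * (E + W)"
  proof -
    have "E^2 \<le> (\<gamma> * sqrt (E + W))^2" using E1 Epos by (intro power_mono) auto
    also have "\<dots> = \<gamma>^2 * (E + W)" using Epos Wpos by (simp add: power_mult_distrib)
    finally show ?thesis .
  qed
  have Wb: "W \<le> 500 * T * \<gamma>^2"
  proof (cases "\<exists>m\<in>{1..?n}. bump (y m) (x m)")
    case False
    then have "W = 0" unfolding W_def by (intro sum.neutral) auto
    then show ?thesis using gpos by simp
  next
    case True
    define a where "a = (LEAST m. m \<in> {1..?n} \<and> bump (y m) (x m))"
    have aP: "a \<in> {1..?n} \<and> bump (y a) (x a)" unfolding a_def using True by (metis (mono_tags, lifting) LeastI)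
    have amin: "\<And>m. m \<in> {1..?n} \<Longrightarrow> bump (y m) (x m) \<Longrightarrow> a \<le> m" unfolding a_def by (simp add: Least_le)
    have a1: "1 \<le> a" "a \<le> ?n" using aP by auto
    have ya_le: "y a / 10 \<le> \<gamma>"
    proof (rule entry[where x=x and c="cc T" and y=y and u=u and G=G and \<gamma>=\<gamma> and a=a and n="?n"])
      show "1 \<le> a" "a \<le> ?n" by (fact a1)+
      show "x 0 = 0" by (fact x0)
      show "\<And>m. 7/8 \<le> cc T m \<and> cc T m \<le> 1" using cc_bounds by auto
      show "\<And>m. 1 \<le> m \<Longrightarrow> m < ?n \<Longrightarrow> y (Suc m) = cc T (Suc m) * y m"
        unfolding y_def using yvec_rec by fastforce
      show "\<And>m. 1 \<le> m \<Longrightarrow> m \<le> ?n \<Longrightarrow> 0 < y m" by (fact ypos)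
      show "\<And>m. 1 \<le> m \<Longrightarrow> m < ?n \<Longrightarrow> G m = (x m - cc T m * x (m-1)) - cc T (Suc m) * (x (Suc m) - cc T (Suc m) * x m) + u m"
        using Gm by (simp add: gq_def rr_def)
      show "G ?n = (x ?n - cc T ?n * x (?n-1)) + u ?n"
      proof -
        have "1 \<le> ?n" using a1 by linarith
        then have "?n \<in> {1..?n}" by simp
        then show ?thesis using Gm[of ?n] by (simp add: gq_def rr_def)
      qed
      show "\<And>m. 1 \<le> m \<Longrightarrow> m \<le> ?n \<Longrightarrow> \<bar>G m\<bar> \<le> \<gamma>" by (fact Gb)
      show "\<And>m. 1 \<le> m \<Longrightarrow> m < a \<Longrightarrow> u m = x m"
      proof -
        fix m assume m: "1 \<le> m" "m < a"
        then have "\<not> bump (y m) (x m)" using amin[of m] a1 by fastforce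
        then show "u m = x m" unfolding u_def using vd_out ypos m a1 by (simp add: bump_def)
      qed
      show "31/32 * y a < x a" using aP by (simp add: bump_def)
      show "0 \<le> u a" unfolding u_def using vd_in ypos aP a1 by (simp add: bump_def)
      show "\<And>m. a < m \<Longrightarrow> m \<le> ?n \<Longrightarrow> 33/32 * y m < x m \<Longrightarrow> u m = x m"
        unfolding u_def using vd_out ypos a1 by simp
    qed
    have "W \<le> (\<Sum>m\<in>{1..?n}. if a \<le> m then (33/32)^2 * (y m)^2 else 0)"
      unfolding W_def
    proof (rule sum_mono)
      fix m assume m: "m \<in> {1..?n}"
      show "(if bump (y m) (x m) then (x m)^2 else 0) \<le> (if a \<le> m then (33/32)^2 * (y m)^2 else 0)"
      proof (cases "bump (y m) (x m)")
        case True
        have yp: "0 < y m" using m ypos by auto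
        have "(x m)^2 \<le> (33/32 * y m)^2" using True yp by (intro power_mono) (auto simp: bump_def)
        also have "(33/32 * y m)^2 = (33/32)^2 * (y m)^2" by (rule power_mult_distrib)
        finally show ?thesis using True amin[OF m] by simp
      qed simp
    qed
    also have "\<dots> = (\<Sum>m\<in>{a..?n}. (33/32)^2 * (y m)^2)"
    proof -
      have "(\<Sum>m\<in>{1..?n}. if a \<le> m then (33/32)^2 * (y m)^2 else 0) = (\<Sum>m\<in>{a..?n}. if a \<le> m then (33/32)^2 * (y m)^2 else 0)"
        using a1 by (intro sum.mono_neutral_right) auto
      also have "\<dots> = (\<Sum>m\<in>{a..?n}. (33/32)^2 * (y m)^2)" by (intro sum.cong) auto
      finally show ?thesis .
    qed
    also have "\<dots> = (33/32)^2 * (\<Sum>m\<in>{a..?n}. (y m)^2)" by (simp add: sum_distrib_left)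
    also have "\<dots> \<le> (33/32)^2 * ((y a)^2 * (T * (64/15)))"
      unfolding y_def by (intro mult_left_mono geo_bound T a1) auto
    also have "\<dots> \<le> (33/32)^2 * ((10 * \<gamma>)^2 * (T * (64/15)))"
    proof -
      have "(y a)^2 \<le> (10 * \<gamma>)^2" using ya_le ypos[OF a1] by (intro power_mono) auto
      then show ?thesis by (intro mult_left_mono mult_right_mono) auto
    qed
    also have "\<dots> \<le> 500 * T * \<gamma>^2"
    proof -
      have "0 \<le> T * \<gamma>^2" by simp
      have e: "(33/32)^2 * ((10 * \<gamma>)^2 * (T * (64/15))) = (1089/1024 * 100 * 64/15) * (T * \<gamma>^2)"
        by (simp add: power2_eq_square)
      have "(1089/1024 * 100 * 64/15) * (T * \<gamma>^2) \<le> 500 * (T * \<gamma>^2)"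
        using \<open>0 \<le> T * \<gamma>^2\<close> by (intro mult_right_mono) auto
      then show ?thesis unfolding e by simp
    qed
    finally show ?thesis .
  qed
  have Tg: "0 \<le> T * \<gamma>^2" by simp
  show ?thesis
  proof (cases "E \<le> W")
    case True
    then show ?thesis using E2 Wb unfolding \<gamma>_def G_def by linarith
  next
    case False
    then have "E^2 \<le> \<gamma>^2 * (2 * E)" using Esq by (smt (verit) mult_left_mono zero_le_power2)
    then have "E * E \<le> (2 * \<gamma>^2) * E" by (simp add: power2_eq_square algebra_simps)
    then have "E \<le> 2 * \<gamma>^2" using False Wpos by (smt (verit) mult_le_cancel_right)
    moreover have "4 * \<gamma>^2 \<le> 1000 * T * \<gamma>^2" using T by (intro mult_right_mono) auto
    ultimately show ?thesis using E2 False unfolding \<gamma>_def G_def by linarith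
  qed
qed

theorem lemma1:
  shows "(\<forall>T t. T \<ge> 1 \<longrightarrow> t \<ge> 1 \<longrightarrow>
            zero_chain (T*t) (\<lambda>x. gfun T t (\<lambda>i. yvec T t i - x i))
          \<and> (\<forall>x\<in>vecs (T*t). gfun T t (\<lambda>_. 0) \<le> gfun T t x)
          \<and> (INF x\<in>vecs (T*t). gfun T t x) = 0
          \<and> (\<forall>x\<in>vecs (T*t). gfun T t x \<le> 1/2 * (\<Sum>i=1..T*t. \<Sum>j=1..T*t.
                 x i * (Bmat T t i j + (if i = j then 1 else 0)) * x j))
          \<and> L_smooth (T*t) 37 (gfun T t))
       \<and> (\<exists>C3>0. \<forall>T t. T \<ge> 1 \<longrightarrow> t \<ge> 1 \<longrightarrow> PL_cond (T*t) (1 / (C3 * real T)) (gfun T t))"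
proof (intro conjI allI impI)
  fix T t :: nat assume T: "T \<ge> 1" and "t \<ge> 1"
  show "zero_chain (T*t) (\<lambda>x. gfun T t (\<lambda>i. yvec T t i - x i))" by (rule zero_chain_g[OF T])
  show "\<forall>x\<in>vecs (T*t). gfun T t (\<lambda>_. 0) \<le> gfun T t x" using gfun_zero gfun_nonneg by simp
  show "(INF x\<in>vecs (T*t). gfun T t x) = 0" by (rule gfun_inf)
  show "\<forall>x\<in>vecs (T*t). gfun T t x \<le> 1/2 * (\<Sum>i=1..T*t. \<Sum>j=1..T*t.
                 x i * (Bmat T t i j + (if i = j then 1 else 0)) * x j)"
    using upper_bound[OF T] by blast
  show "L_smooth (T*t) 37 (gfun T t)" by (rule smooth_gfun[OF T])
next
  show "\<exists>C3>0. \<forall>T t. T \<ge> 1 \<longrightarrow> t \<ge> 1 \<longrightarrow> PL_cond (T*t) (1 / (C3 * real T)) (gfun T t)"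
  proof (intro exI[of _ "1000::real"] conjI allI impI)
    fix T t :: nat assume T: "T \<ge> 1" and "t \<ge> 1"
    show "PL_cond (T*t) (1 / (1000 * real T)) (gfun T t)"
      unfolding PL_cond_def
    proof (intro conjI ballI diff_gfun[OF T])
      show "0 < 1 / (1000 * real T)" using T by simp
      fix x assume x: "x \<in> vecs (T*t)"
      have main: "2 * gfun T t x \<le> 1000 * real T * (vnorm (T*t) (gg T t x))^2" using PL_main[OF T x] by simp
      have "2 * (1 / (1000 * real T)) * (gfun T t x - 0) = (2 * gfun T t x) / (1000 * T)" by simp
      also have "\<dots> \<le> (1000 * real T * (vnorm (T*t) (gg T t x))^2) / (1000 * T)"
        using main T by (intro divide_right_mono) auto
      also have "\<dots> = (vnorm (T*t) (gg T t x))^2" using T by simp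
      finally show "2 * (1 / (1000 * real T)) * (gfun T t x - (INF z\<in>vecs (T*t). gfun T t z)) \<le> (vnorm (T*t) (grad (T*t) (gfun T t) x))^2"
        unfolding gfun_inf grad_gfun[OF T x] .
    qed
  qed simp
qed

end
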